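(* Let $\mathcal{M}=(M,\mathcal{C})$ be a $\beta$-model of MK$^*$ and let $(M_0,R)$ be a coding pair in $\mathcal{M}$. Then the quotient structure $(\tilde M_0,\tilde R)$ is extensional and well-founded.
   Context: MK$^*$ is Morse–Kelley class theory (two-sorted: sets and classes; models $(M,\mathcal{C})$ with $M$ a transitive ZFC model, $\mathcal{C}\subseteq\mathcal{P}(M)$; axioms include Class Comprehension for all two-sorted formulas and Global Choice, a class well-ordering of $M$) plus Class-Bounding $\forall x\,\exists A\,\varphi(x,A)\to\exists B\,\forall x\,\exists y\,\varphi(x,(B)_y)$, $(B)_y=\{z:(y,z)\in B\}$. A $\beta$-model: classes are well-founded in the model iff truly well-founded. A coding pair is $(M_0,R)$ with $M_0\in\mathcal{C}$ having a distinguished element $a$ and $R\in\mathcal{C}$ a binary relation on $M_0$ such that: (a) each $z\in M_0$ has a unique $n$ such that there is an $R$-chain $zRz_{n-1}R\cdots Rz_1Ra$; (b) if $y\neq z$, $yRx$, $zRx$ then $(M_0,R)\restriction y\not\cong(M_0,R)\restriction z$, where $(M_0,R)\restriction y$ is $y$ together with all elements connected to $y$ by an $R$-chain, with $R$ restricted; (c) if $y\neq z$ have the same $R$-distance from $a$ then $vRy\to\neg(vRz)$; (d) $R$ is well-founded. The quotient: for $b\in M_0$ let $[b]=\{b'\in M_0:(M_0,R)\restriction b'\cong(M_0,R)\restriction b\}$, let $\tilde b$ be a representative of $[b]$ chosen via the global well-order, $\tilde M_0=\{\tilde b:b\in M_0\}$, and $\tilde b\,\tilde R\,\tilde c$ iff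 there exist $b_0\in[b]$, $c_0\in[c]$ with $b_0Rc_0$. *)

theory Defs
  imports Main
begin

text \<open>The ambient universe V is modelled by a type 'a with a (truly well-founded)
membership relation E, where E x y means x is an element of y.  A model of MK is a
pair (M, C) with M a transitive set of the universe and C a collection of subsets of M.\<close>

definition transitive_in :: "('a \<Rightarrow> 'a \<Rightarrow> bool) \<Rightarrow> 'a set \<Rightarrow> bool" where
  "transitive_in E M \<longleftrightarrow> (\<forall>x\<in>M. \<forall>y. E y x \<longrightarrow> y \<in> M)"

definition upair :: "('a \<Rightarrow> 'a \<Rightarrow> bool) \<Rightarrow> 'a set \<Rightarrow> 'a \<Rightarrow> 'a \<Rightarrow> 'a" where
  "upair E M x y = (THE u. u \<in> M \<and> (\<forall>w\<in>M. E w u \<longleftrightarrow> (w = x \<or> w = y)))"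

definition kpair :: "('a \<Rightarrow> 'a \<Rightarrow> bool) \<Rightarrow> 'a set \<Rightarrow> 'a \<Rightarrow> 'a \<Rightarrow> 'a" where
  "kpair E M x y = upair E M (upair E M x x) (upair E M x y)"

definition crel :: "('a \<Rightarrow> 'a \<Rightarrow> bool) \<Rightarrow> 'a set \<Rightarrow> 'a set \<Rightarrow> ('a \<times> 'a) set" where
  "crel E M R = {(x, y). x \<in> M \<and> y \<in> M \<and> kpair E M x y \<in> R}"

definition slice :: "('a \<Rightarrow> 'a \<Rightarrow> bool) \<Rightarrow> 'a set \<Rightarrow> 'a set \<Rightarrow> 'a \<Rightarrow> 'a set" where
  "slice E M B y = {z \<in> M. kpair E M y z \<in> B}"

datatype fm =
    SMem nat nat
  | SEq nat nat
  | CMem nat nat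
  | Neg fm
  | Conj fm fm
  | ExS nat fm
  | ExC nat fm

fun sat :: "('a \<Rightarrow> 'a \<Rightarrow> bool) \<Rightarrow> 'a set \<Rightarrow> 'a set set
             \<Rightarrow> (nat \<Rightarrow> 'a) \<Rightarrow> (nat \<Rightarrow> 'a set) \<Rightarrow> fm \<Rightarrow> bool" where
  "sat E M C s c (SMem i j) = E (s i) (s j)"
| "sat E M C s c (SEq i j) = (s i = s j)"
| "sat E M C s c (CMem i J) = (s i \<in> c J)"
| "sat E M C s c (Neg \<phi>) = (\<not> sat E M C s c \<phi>)"
| "sat E M C s c (Conj \<phi> \<psi>) = (sat E M C s c \<phi> \<and> sat E M C s c \<psi>)"
| "sat E M C s c (ExS i \<phi>) = (\<exists>u\<in>M. sat E M C (s(i := u)) c \<phi>)"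
| "sat E M C s c (ExC J \<phi>) = (\<exists>A\<in>C. sat E M C s (c(J := A)) \<phi>)"

definition assignment :: "'a set \<Rightarrow> 'a set set \<Rightarrow> (nat \<Rightarrow> 'a) \<Rightarrow> (nat \<Rightarrow> 'a set) \<Rightarrow> bool" where
  "assignment M C s c \<longleftrightarrow> range s \<subseteq> M \<and> range c \<subseteq> C"

definition model_wf :: "('a \<Rightarrow> 'a \<Rightarrow> bool) \<Rightarrow> 'a set \<Rightarrow> 'a set set \<Rightarrow> 'a set \<Rightarrow> bool" where
  "model_wf E M C R \<longleftrightarrow>
     (\<forall>X\<in>C. X \<noteq> {} \<longrightarrow> (\<exists>x\<in>X. \<forall>y\<in>X. (y, x) \<notin> crel E M R))"

definition global_wo :: "('a \<Rightarrow> 'a \<Rightarrow> bool) \<Rightarrow> 'a set \<Rightarrow> 'a set set \<Rightarrow> 'a set \<Rightarrow> bool" where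
  "global_wo E M C W \<longleftrightarrow> W \<in> C \<and>
     (\<forall>x\<in>M. (x, x) \<notin> crel E M W) \<and>
     (\<forall>x\<in>M. \<forall>y\<in>M. \<forall>z\<in>M. (x, y) \<in> crel E M W \<longrightarrow> (y, z) \<in> crel E M W \<longrightarrow> (x, z) \<in> crel E M W) \<and>
     (\<forall>x\<in>M. \<forall>y\<in>M. x \<noteq> y \<longrightarrow> (x, y) \<in> crel E M W \<or> (y, x) \<in> crel E M W) \<and>
     model_wf E M C W"

definition MK_star :: "('a \<Rightarrow> 'a \<Rightarrow> bool) \<Rightarrow> 'a set \<Rightarrow> 'a set set \<Rightarrow> bool" where
  "MK_star E M C \<longleftrightarrow>
     \<comment> \<open>classes are subclasses of M\<close>
     (\<forall>X\<in>C. X \<subseteq> M) \<and>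
     \<comment> \<open>Set Extensionality\<close>
     (\<forall>x\<in>M. \<forall>y\<in>M. (\<forall>z\<in>M. E z x \<longleftrightarrow> E z y) \<longrightarrow> x = y) \<and>
     \<comment> \<open>Empty set\<close>
     (\<exists>e\<in>M. \<forall>z\<in>M. \<not> E z e) \<and>
     \<comment> \<open>Pairing\<close>
     (\<forall>x\<in>M. \<forall>y\<in>M. \<exists>p\<in>M. \<forall>z\<in>M. E z p \<longleftrightarrow> (z = x \<or> z = y)) \<and>
     \<comment> \<open>Union\<close>
     (\<forall>x\<in>M. \<exists>u\<in>M. \<forall>z\<in>M. E z u \<longleftrightarrow> (\<exists>y\<in>M. E z y \<and> E y x)) \<and>
     \<comment> \<open>Power set\<close>
     (\<forall>x\<in>M. \<exists>p\<in>M. \<forall>z\<in>M. E z p \<longleftrightarrow> (\<forall>w\<in>M. E w z \<longrightarrow> E w x)) \<and>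
     \<comment> \<open>Infinity\<close>
     (\<exists>x\<in>M. (\<exists>e\<in>M. E e x \<and> (\<forall>z\<in>M. \<not> E z e)) \<and>
        (\<forall>y\<in>M. E y x \<longrightarrow> (\<exists>t\<in>M. E t x \<and> (\<forall>w\<in>M. E w t \<longleftrightarrow> (E w y \<or> w = y))))) \<and>
     \<comment> \<open>Foundation\<close>
     (\<forall>x\<in>M. (\<exists>y\<in>M. E y x) \<longrightarrow> (\<exists>y\<in>M. E y x \<and> (\<forall>z\<in>M. E z y \<longrightarrow> \<not> E z x))) \<and>
     \<comment> \<open>Separation (with class parameters): the intersection of a set with a class is a set\<close>
     (\<forall>X\<in>C. \<forall>a\<in>M. \<exists>b\<in>M. \<forall>z\<in>M. E z b \<longleftrightarrow> (E z a \<and> z \<in> X)) \<and>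
     \<comment> \<open>Replacement: the image of a set under a class function is contained in a set\<close>
     (\<forall>F\<in>C. (\<forall>x\<in>M. \<forall>y\<in>M. \<forall>y'\<in>M. kpair E M x y \<in> F \<longrightarrow> kpair E M x y' \<in> F \<longrightarrow> y = y') \<longrightarrow>
        (\<forall>a\<in>M. \<exists>b\<in>M. \<forall>x\<in>M. \<forall>y\<in>M. E x a \<longrightarrow> kpair E M x y \<in> F \<longrightarrow> E y b)) \<and>
     \<comment> \<open>Class Extensionality\<close>
     (\<forall>X\<in>C. \<forall>Y\<in>C. (\<forall>z\<in>M. z \<in> X \<longleftrightarrow> z \<in> Y) \<longrightarrow> X = Y) \<and>
     \<comment> \<open>Class Comprehension for all two-sorted formulas, with parameters\<close>
     (\<forall>\<phi> x s c. assignment M C s c \<longrightarrow>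
        (\<exists>X\<in>C. \<forall>u\<in>M. u \<in> X \<longleftrightarrow> sat E M C (s(x := u)) c \<phi>)) \<and>
     \<comment> \<open>Global Choice\<close>
     (\<exists>W. global_wo E M C W) \<and>
     \<comment> \<open>Class-Bounding\<close>
     (\<forall>\<phi> x A s c. assignment M C s c \<longrightarrow>
        (\<forall>u\<in>M. \<exists>A'\<in>C. sat E M C (s(x := u)) (c(A := A')) \<phi>) \<longrightarrow>
        (\<exists>B\<in>C. \<forall>u\<in>M. \<exists>v\<in>M. sat E M C (s(x := u)) (c(A := slice E M B v)) \<phi>))"

definition beta_model :: "('a \<Rightarrow> 'a \<Rightarrow> bool) \<Rightarrow> 'a set \<Rightarrow> 'a set set \<Rightarrow> bool" where
  "beta_model E M C \<longleftrightarrow> (\<forall>R\<in>C. model_wf E M C R \<longleftrightarrow> wf (crel E M R))"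

definition restr :: "('a \<Rightarrow> 'a \<Rightarrow> bool) \<Rightarrow> 'a set \<Rightarrow> 'a set \<Rightarrow> 'a set \<Rightarrow> 'a \<Rightarrow> 'a set" where
  "restr E M M0 R y = {v \<in> M0. (v, y) \<in> (crel E M R \<inter> (M0 \<times> M0))\<^sup>*}"

definition iso_in :: "('a \<Rightarrow> 'a \<Rightarrow> bool) \<Rightarrow> 'a set \<Rightarrow> 'a set set \<Rightarrow> 'a set \<Rightarrow> 'a set
                      \<Rightarrow> 'a \<Rightarrow> 'a \<Rightarrow> bool" where
  "iso_in E M C M0 R y z \<longleftrightarrow>
     (\<exists>F\<in>C.
        (\<forall>p\<in>F. \<exists>u\<in>restr E M M0 R y. \<exists>v\<in>restr E M M0 R z. p = kpair E M u v) \<and>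
        (\<forall>u\<in>restr E M M0 R y. \<exists>!v. v \<in> restr E M M0 R z \<and> kpair E M u v \<in> F) \<and>
        (\<forall>v\<in>restr E M M0 R z. \<exists>!u. u \<in> restr E M M0 R y \<and> kpair E M u v \<in> F) \<and>
        (\<forall>u\<in>restr E M M0 R y. \<forall>u'\<in>restr E M M0 R y.
         \<forall>v\<in>restr E M M0 R z. \<forall>v'\<in>restr E M M0 R z.
           kpair E M u v \<in> F \<longrightarrow> kpair E M u' v' \<in> F \<longrightarrow>
           (kpair E M u u' \<in> R \<longleftrightarrow> kpair E M v v' \<in> R)))"

definition rdist :: "('a \<Rightarrow> 'a \<Rightarrow> bool) \<Rightarrow> 'a set \<Rightarrow> 'a set \<Rightarrow> 'a set \<Rightarrow> 'a \<Rightarrow> 'a \<Rightarrow> nat \<Rightarrow> bool" where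
  "rdist E M M0 R a z n \<longleftrightarrow> (z, a) \<in> (crel E M R \<inter> (M0 \<times> M0)) ^^ n"

definition coding_pair :: "('a \<Rightarrow> 'a \<Rightarrow> bool) \<Rightarrow> 'a set \<Rightarrow> 'a set set \<Rightarrow> 'a set \<Rightarrow> 'a set \<Rightarrow> 'a \<Rightarrow> bool" where
  "coding_pair E M C M0 R a \<longleftrightarrow>
     M0 \<in> C \<and> R \<in> C \<and> a \<in> M0 \<and>
     \<comment> \<open>R is a binary relation on M0\<close>
     (\<forall>p\<in>R. \<exists>x\<in>M0. \<exists>y\<in>M0. p = kpair E M x y) \<and>
     \<comment> \<open>(a)\<close>
     (\<forall>z\<in>M0. \<exists>!n. rdist E M M0 R a z n) \<and>
     \<comment> \<open>(b)\<close>
     (\<forall>x\<in>M0. \<forall>y\<in>M0. \<forall>z\<in>M0. y \<noteq> z \<longrightarrow> (y, x) \<in> crel E M R \<longrightarrow> (z, x) \<in> crel E M R \<longrightarrow>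
        \<not> iso_in E M C M0 R y z) \<and>
     \<comment> \<open>(c)\<close>
     (\<forall>y\<in>M0. \<forall>z\<in>M0. \<forall>v\<in>M0. \<forall>n. y \<noteq> z \<longrightarrow> rdist E M M0 R a y n \<longrightarrow> rdist E M M0 R a z n \<longrightarrow>
        (v, y) \<in> crel E M R \<longrightarrow> (v, z) \<notin> crel E M R) \<and>
     \<comment> \<open>(d): R is well-founded (in the model)\<close>
     model_wf E M C R"

definition iso_class :: "('a \<Rightarrow> 'a \<Rightarrow> bool) \<Rightarrow> 'a set \<Rightarrow> 'a set set \<Rightarrow> 'a set \<Rightarrow> 'a set \<Rightarrow> 'a \<Rightarrow> 'a set" where
  "iso_class E M C M0 R b = {b' \<in> M0. iso_in E M C M0 R b' b}"

definition rep :: "('a \<Rightarrow> 'a \<Rightarrow> bool) \<Rightarrow> 'a set \<Rightarrow> 'a set set \<Rightarrow> 'a set \<Rightarrow> 'a set \<Rightarrow> 'a set \<Rightarrow> 'a \<Rightarrow> 'a" where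
  "rep E M C W M0 R b = (THE c. c \<in> iso_class E M C M0 R b \<and>
       (\<forall>d\<in>iso_class E M C M0 R b. d \<noteq> c \<longrightarrow> (c, d) \<in> crel E M W))"

definition qcarrier :: "('a \<Rightarrow> 'a \<Rightarrow> bool) \<Rightarrow> 'a set \<Rightarrow> 'a set set \<Rightarrow> 'a set \<Rightarrow> 'a set \<Rightarrow> 'a set \<Rightarrow> 'a set" where
  "qcarrier E M C W M0 R = rep E M C W M0 R ` M0"

definition qrel :: "('a \<Rightarrow> 'a \<Rightarrow> bool) \<Rightarrow> 'a set \<Rightarrow> 'a set set \<Rightarrow> 'a set \<Rightarrow> 'a set \<Rightarrow> 'a set \<Rightarrow> ('a \<times> 'a) set" where
  "qrel E M C W M0 R = {(x, y). x \<in> qcarrier E M C W M0 R \<and> y \<in> qcarrier E M C W M0 R \<and>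
      (\<exists>b0\<in>iso_class E M C M0 R x. \<exists>c0\<in>iso_class E M C M0 R y. (b0, c0) \<in> crel E M R)}"

definition extensional_rel :: "'a set \<Rightarrow> ('a \<times> 'a) set \<Rightarrow> bool" where
  "extensional_rel A S \<longleftrightarrow>
     (\<forall>x\<in>A. \<forall>y\<in>A. (\<forall>v\<in>A. (v, x) \<in> S \<longleftrightarrow> (v, y) \<in> S) \<longrightarrow> x = y)"

end

theory Submission
  imports Defs
begin

locale cp =
  fixes E :: "'a \<Rightarrow> 'a \<Rightarrow> bool" and M :: "'a set" and C :: "'a set set"
    and M0 R W :: "'a set" and a :: 'a
  assumes wfE: "wfP E"
    and trM: "transitive_in E M"
    and MK: "MK_star E M C"
    and beta: "beta_model E M C"
    and cpair: "coding_pair E M C M0 R a"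
    and gwo: "global_wo E M C W"
begin

lemma MK1: "(\<forall>X\<in>C. X \<subseteq> M)"
  using MK unfolding MK_star_def by (elim conjE) assumption
lemma MK2: "(\<forall>x\<in>M. \<forall>y\<in>M. (\<forall>z\<in>M. E z x \<longleftrightarrow> E z y) \<longrightarrow> x = y)"
  using MK unfolding MK_star_def by (elim conjE) assumption
lemma MK3: "(\<forall>x\<in>M. \<forall>y\<in>M. \<exists>p\<in>M. \<forall>z\<in>M. E z p \<longleftrightarrow> (z = x \<or> z = y))"
  using MK unfolding MK_star_def by (elim conjE) assumption
lemma MK4: "(\<forall>\<phi> x s c. assignment M C s c \<longrightarrow>
        (\<exists>X\<in>C. \<forall>u\<in>M. u \<in> X \<longleftrightarrow> sat E M C (s(x := u)) c \<phi>))"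
  using MK unfolding MK_star_def by (elim conjE) assumption
lemmas MKc = MK1 MK2 MK3 MK4

lemma class_sub: "X \<in> C \<Longrightarrow> X \<subseteq> M"
  using MKc(1) by blast

lemma extM: "x \<in> M \<Longrightarrow> y \<in> M \<Longrightarrow> (\<forall>z\<in>M. E z x \<longleftrightarrow> E z y) \<Longrightarrow> x = y"
  using MKc(2) by blast

lemma pairingM: "x \<in> M \<Longrightarrow> y \<in> M \<Longrightarrow> \<exists>p\<in>M. \<forall>z\<in>M. E z p \<longleftrightarrow> (z = x \<or> z = y)"
  using MKc(3) by blast

lemma compr: "assignment M C s c \<Longrightarrow> \<exists>X\<in>C. \<forall>u\<in>M. u \<in> X \<longleftrightarrow> sat E M C (s(x := u)) c \<phi>"
  using MKc(4) by blast

lemma upair: assumes "x \<in> M" "y \<in> M"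
  shows "upair E M x y \<in> M \<and> (\<forall>w\<in>M. E w (upair E M x y) \<longleftrightarrow> w = x \<or> w = y)"
proof -
  obtain p where p: "p \<in> M" "\<forall>z\<in>M. E z p \<longleftrightarrow> (z = x \<or> z = y)" using pairingM assms by blast
  have "\<exists>!u. u \<in> M \<and> (\<forall>w\<in>M. E w u \<longleftrightarrow> (w = x \<or> w = y))"
  proof
    show "p \<in> M \<and> (\<forall>w\<in>M. E w p \<longleftrightarrow> (w = x \<or> w = y))" using p by blast
  next
    fix u assume "u \<in> M \<and> (\<forall>w\<in>M. E w u \<longleftrightarrow> (w = x \<or> w = y))"
    then show "u = p" using p extM by blast
  qed
  then show ?thesis unfolding upair_def by (rule theI') 
qed

lemma upair_M: "x \<in> M \<Longrightarrow> y \<in> M \<Longrightarrow> upair E M x y \<in> M"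
  using upair by blast

lemma upair_eq: assumes "x \<in> M" "y \<in> M" "x' \<in> M" "y' \<in> M"
  shows "upair E M x y = upair E M x' y' \<longleftrightarrow> {x, y} = {x', y'}"
proof
  assume h: "upair E M x y = upair E M x' y'"
  have "\<forall>w\<in>M. (w = x \<or> w = y) \<longleftrightarrow> (w = x' \<or> w = y')"
    using upair[OF assms(1,2)] upair[OF assms(3,4)] h by metis
  then show "{x, y} = {x', y'}" using assms by blast
next
  assume h: "{x, y} = {x', y'}"
  show "upair E M x y = upair E M x' y'"
    apply (rule extM)
    using upair[OF assms(1,2)] upair[OF assms(3,4)] h by (auto simp: doubleton_eq_iff)
qed

lemma kpair_M: "x \<in> M \<Longrightarrow> y \<in> M \<Longrightarrow> kpair E M x y \<in> M"
  unfolding kpair_def by (simp add: upair_M)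

lemma kpair_inj: assumes "x \<in> M" "y \<in> M" "x' \<in> M" "y' \<in> M"
    and "kpair E M x y = kpair E M x' y'"
  shows "x = x' \<and> y = y'"
proof -
  have e: "{upair E M x x, upair E M x y} = {upair E M x' x', upair E M x' y'}"
    using assms(5) unfolding kpair_def
    by (subst (asm) upair_eq) (simp_all add: upair_M assms(1-4))
  have u: "\<And>p q r t. p \<in> M \<Longrightarrow> q \<in> M \<Longrightarrow> r \<in> M \<Longrightarrow> t \<in> M \<Longrightarrow>
     upair E M p q = upair E M r t \<longleftrightarrow> {p, q} = {r, t}" using upair_eq by blast
  from e have "(upair E M x x = upair E M x' x' \<and> upair E M x y = upair E M x' y') \<or>
       (upair E M x x = upair E M x' y' \<and> upair E M x y = upair E M x' x')"
    by (auto simp: doubleton_eq_iff)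
  then show ?thesis
  proof
    assume h: "upair E M x x = upair E M x' x' \<and> upair E M x y = upair E M x' y'"
    then have "{x,x} = {x',x'}" "{x,y} = {x',y'}" using u assms by blast+
    then show ?thesis by (auto simp: doubleton_eq_iff)
  next
    assume h: "upair E M x x = upair E M x' y' \<and> upair E M x y = upair E M x' x'"
    then have "{x,x} = {x',y'}" "{x,y} = {x',x'}" using u assms by blast+
    then show ?thesis by (auto simp: doubleton_eq_iff)
  qed
qed


lemma cp1: "M0 \<in> C"
  using cpair unfolding coding_pair_def by (elim conjE) assumption
lemma cp2: "R \<in> C"
  using cpair unfolding coding_pair_def by (elim conjE) assumption
lemma cp3: "a \<in> M0"
  using cpair unfolding coding_pair_def by (elim conjE) assumption
lemma cp4: "(\<forall>p\<in>R. \<exists>x\<in>M0. \<exists>y\<in>M0. p = kpair E M x y)"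
  using cpair unfolding coding_pair_def by (elim conjE) assumption
lemma cp5: "(\<forall>z\<in>M0. \<exists>!n. rdist E M M0 R a z n)"
  using cpair unfolding coding_pair_def by (elim conjE) assumption
lemma cp6: "(\<forall>x\<in>M0. \<forall>y\<in>M0. \<forall>z\<in>M0. y \<noteq> z \<longrightarrow> (y, x) \<in> crel E M R \<longrightarrow> (z, x) \<in> crel E M R \<longrightarrow>
        \<not> iso_in E M C M0 R y z)"
  using cpair unfolding coding_pair_def by (elim conjE) assumption
lemma cp7: "(\<forall>y\<in>M0. \<forall>z\<in>M0. \<forall>v\<in>M0. \<forall>n. y \<noteq> z \<longrightarrow> rdist E M M0 R a y n \<longrightarrow> rdist E M M0 R a z n \<longrightarrow>
        (v, y) \<in> crel E M R \<longrightarrow> (v, z) \<notin> crel E M R)"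
  using cpair unfolding coding_pair_def by (elim conjE) assumption
lemma cp8: "model_wf E M C R"
  using cpair unfolding coding_pair_def by (elim conjE) assumption
lemmas cp_parts = cp1 cp2 cp3 cp4 cp5 cp6 cp7 cp8

abbreviation S where "S \<equiv> crel E M R"
abbreviation dn where "dn t \<equiv> restr E M M0 R t"

lemma M0M: "M0 \<subseteq> M" using class_sub cp_parts(1) by blast

lemma crel_iff: "(x, y) \<in> crel E M X \<longleftrightarrow> x \<in> M \<and> y \<in> M \<and> kpair E M x y \<in> X"
  unfolding crel_def by simp

lemma R_kp: assumes "kpair E M x y \<in> R" "x \<in> M" "y \<in> M" shows "x \<in> M0 \<and> y \<in> M0"
proof -
  obtain x' y' where "x' \<in> M0" "y' \<in> M0" "kpair E M x y = kpair E M x' y'"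
    using cp_parts(4) assms(1) by blast
  then show ?thesis using kpair_inj[of x y x' y'] assms M0M by auto
qed

lemma S_M0: "(x, y) \<in> S \<Longrightarrow> x \<in> M0 \<and> y \<in> M0"
  using R_kp crel_iff by blast

lemma S_eq: "crel E M R \<inter> (M0 \<times> M0) = S"
  using S_M0 by auto

lemma wfS: "wf S"
proof -
  have "model_wf E M C R \<longleftrightarrow> wf (crel E M R)" using beta cp2 unfolding beta_model_def by (rule bspec)
  then show ?thesis using cp8 by simp
qed

lemma WC: "W \<in> C" using gwo unfolding global_wo_def by (elim conjE) assumption
lemma Wmwf: "model_wf E M C W" using gwo unfolding global_wo_def by (elim conjE) assumption
lemma Wirr: "\<forall>x\<in>M. (x, x) \<notin> crel E M W" using gwo unfolding global_wo_def by (elim conjE) assumption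
lemma Wtr: "(\<forall>x\<in>M. \<forall>y\<in>M. \<forall>z\<in>M. (x, y) \<in> crel E M W \<longrightarrow> (y, z) \<in> crel E M W \<longrightarrow> (x, z) \<in> crel E M W)"
  using gwo unfolding global_wo_def by (elim conjE) assumption
lemma Wtot: "(\<forall>x\<in>M. \<forall>y\<in>M. x \<noteq> y \<longrightarrow> (x, y) \<in> crel E M W \<or> (y, x) \<in> crel E M W)"
  using gwo unfolding global_wo_def by (elim conjE) assumption

lemma wfW: "wf (crel E M W)"
proof -
  have "model_wf E M C W \<longleftrightarrow> wf (crel E M W)" using beta WC unfolding beta_model_def by (rule bspec)
  then show ?thesis using Wmwf by simp
qed

lemma acyc: "(x, x) \<notin> S\<^sup>+"
proof -
  have "acyclic S" using wfS by (rule wf_acyclic)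
  then show ?thesis unfolding acyclic_def by blast
qed

lemma rdist_iff: "rdist E M M0 R a z n \<longleftrightarrow> (z, a) \<in> S ^^ n"
  unfolding rdist_def S_eq ..

lemma dist_unique: assumes "z \<in> M0" "(z, a) \<in> S ^^ n" "(z, a) \<in> S ^^ m" shows "n = m"
proof -
  have "\<exists>!n. rdist E M M0 R a z n" using cp5 assms(1) by (rule bspec)
  then show ?thesis using assms(2,3) unfolding rdist_iff by (metis)
qed

lemma dist_ex: assumes "z \<in> M0" shows "\<exists>n. (z, a) \<in> S ^^ n"
proof -
  have "\<exists>!n. rdist E M M0 R a z n" using cp5 assms(1) by (rule bspec)
  then show ?thesis unfolding rdist_iff by (metis)
qed

lemma funS: assumes "(t, y) \<in> S" "(t, z) \<in> S" shows "y = z"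
proof (rule ccontr)
  assume ne: "y \<noteq> z"
  have t: "t \<in> M0" "y \<in> M0" "z \<in> M0" using assms S_M0 by blast+
  obtain m where m: "(y, a) \<in> S ^^ m" using dist_ex[OF t(2)] by blast
  obtain m' where m': "(z, a) \<in> S ^^ m'" using dist_ex[OF t(3)] by blast
  have "(t, a) \<in> S ^^ Suc m" "(t, a) \<in> S ^^ Suc m'"
    using relpow_Suc_I2[OF assms(1) m] relpow_Suc_I2[OF assms(2) m'] by auto
  then have "Suc m = Suc m'" using dist_unique[OF t(1)] by blast
  then have "rdist E M M0 R a y m" "rdist E M M0 R a z m" using m m' rdist_iff by auto
  then have "(t, z) \<notin> crel E M R" by (rule cp7[rule_format, OF t(2) t(3) t(1) ne _ _ assms(1)])
  then show False using assms(2) by simp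
qed

lemma a_top: "(a, z) \<notin> S"
proof
  assume h: "(a, z) \<in> S"
  then have z: "z \<in> M0" using S_M0 by blast
  obtain m where "(z, a) \<in> S ^^ m" using dist_ex[OF z] by blast
  then have "(a, a) \<in> S ^^ Suc m" using relpow_Suc_I2[OF h] by blast
  moreover have "(a, a) \<in> S ^^ 0" by simp
  ultimately show False using dist_unique[OF cp3] by fastforce
qed

lemma linS: "(t, x) \<in> S\<^sup>* \<Longrightarrow> (t, y) \<in> S\<^sup>* \<Longrightarrow> (x, y) \<in> S\<^sup>* \<or> (y, x) \<in> S\<^sup>*"
proof (induction arbitrary: y rule: converse_rtrancl_induct)
  case base
  then show ?case by blast
next
  case (step t t')
  from step.prems show ?case
  proof (cases rule: converse_rtranclE)
    case base
    then show ?thesis using step.hyps(1,2) converse_rtrancl_into_rtrancl[OF step.hyps(1,2)] by simp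
  next
    case (step t'')
    then have "t'' = t'" using funS \<open>(t, t') \<in> S\<close> by blast
    then show ?thesis using step.IH step by blast
  qed
qed

lemma up_fin_aux: "(t, a) \<in> S ^^ n \<Longrightarrow> finite {z. (t, z) \<in> S\<^sup>*}"
proof (induction n arbitrary: t)
  case 0
  then have "t = a" by simp
  moreover have "{z. (a, z) \<in> S\<^sup>*} \<subseteq> {a}"
    using a_top by (auto elim: converse_rtranclE)
  ultimately show ?case using finite_subset by blast
next
  case (Suc n)
  then obtain t1 where t1: "(t, t1) \<in> S" "(t1, a) \<in> S ^^ n" using relpow_Suc_D2[OF Suc.prems] by blast
  have "{z. (t, z) \<in> S\<^sup>*} \<subseteq> insert t {z. (t1, z) \<in> S\<^sup>*}"
  proof
    fix z assume "z \<in> {z. (t, z) \<in> S\<^sup>*}"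
    then have "(t, z) \<in> S\<^sup>*" by simp
    then show "z \<in> insert t {z. (t1, z) \<in> S\<^sup>*}"
    proof (cases rule: converse_rtranclE)
      case (step u)
      then have "u = t1" using funS t1 by blast
      then show ?thesis using step by simp
    qed simp
  qed
  then show ?case using Suc.IH[OF t1(2)] by (rule finite_subset[OF _ finite_insert[THEN iffD2]])
qed

lemma up_fin: "t \<in> M0 \<Longrightarrow> finite {z. (t, z) \<in> S\<^sup>*}"
  using dist_ex up_fin_aux by metis

end

definition giso :: "('a \<times> 'a) set \<Rightarrow> ('a \<Rightarrow> 'a) \<Rightarrow> 'a set \<Rightarrow> 'a set \<Rightarrow> bool" where
  "giso r g A B \<longleftrightarrow> bij_betw g A B \<and> (\<forall>x\<in>A. \<forall>y\<in>A. (x, y) \<in> r \<longleftrightarrow> (g x, g y) \<in> r)"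

lemma giso_id: "giso r id A A"
  unfolding giso_def by simp

lemma giso_inv: assumes "giso r g A B" shows "giso r (inv_into A g) B A"
proof -
  have b: "bij_betw g A B" and p: "\<forall>x\<in>A. \<forall>y\<in>A. (x, y) \<in> r \<longleftrightarrow> (g x, g y) \<in> r"
    using assms unfolding giso_def by auto
  have b': "bij_betw (inv_into A g) B A" using b by (rule bij_betw_inv_into)
  have "\<forall>x\<in>B. \<forall>y\<in>B. (x, y) \<in> r \<longleftrightarrow> (inv_into A g x, inv_into A g y) \<in> r"
  proof (intro ballI)
    fix x y assume xy: "x \<in> B" "y \<in> B"
    then have "inv_into A g x \<in> A" "inv_into A g y \<in> A" using b' bij_betwE by blast+
    moreover have "g (inv_into A g x) = x" "g (inv_into A g y) = y"
      using xy b by (simp_all add: bij_betw_inv_into_right)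
    ultimately show "(x, y) \<in> r \<longleftrightarrow> (inv_into A g x, inv_into A g y) \<in> r" using p by metis
  qed
  then show ?thesis using b' unfolding giso_def by blast
qed

lemma giso_comp: assumes "giso r g A B" "giso r h B D" shows "giso r (h \<circ> g) A D"
proof -
  have b: "bij_betw g A B" "bij_betw h B D" using assms unfolding giso_def by auto
  have "\<forall>x\<in>A. \<forall>y\<in>A. (x, y) \<in> r \<longleftrightarrow> ((h \<circ> g) x, (h \<circ> g) y) \<in> r"
  proof (intro ballI)
    fix x y assume "x \<in> A" "y \<in> A"
    moreover have "g x \<in> B" "g y \<in> B" using b calculation bij_betwE by blast+
    ultimately show "(x, y) \<in> r \<longleftrightarrow> ((h \<circ> g) x, (h \<circ> g) y) \<in> r"
      using assms unfolding giso_def by simp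
  qed
  then show ?thesis using bij_betw_trans[OF b] unfolding giso_def by blast
qed

lemma giso_mem: "giso r g A B \<Longrightarrow> x \<in> A \<Longrightarrow> g x \<in> B"
  unfolding giso_def using bij_betwE by blast

lemma giso_rel: "giso r g A B \<Longrightarrow> x \<in> A \<Longrightarrow> y \<in> A \<Longrightarrow> (x, y) \<in> r \<longleftrightarrow> (g x, g y) \<in> r"
  unfolding giso_def by blast

lemma giso_inj: "giso r g A B \<Longrightarrow> x \<in> A \<Longrightarrow> y \<in> A \<Longrightarrow> g x = g y \<Longrightarrow> x = y"
  unfolding giso_def bij_betw_def inj_on_def by blast

lemma giso_surj: "giso r g A B \<Longrightarrow> z \<in> B \<Longrightarrow> \<exists>x\<in>A. g x = z"
  unfolding giso_def bij_betw_def by blast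

lemma giso_subset: assumes "giso r g A B" "A' \<subseteq> A" shows "giso r g A' (g ` A')"
proof -
  have "inj_on g A" using assms(1) unfolding giso_def bij_betw_def by blast
  then have "inj_on g A'" using assms(2) by (rule inj_on_subset)
  then have "bij_betw g A' (g ` A')" by (simp add: bij_betw_def)
  moreover have "\<forall>x\<in>A'. \<forall>y\<in>A'. (x, y) \<in> r \<longleftrightarrow> (g x, g y) \<in> r"
    using assms unfolding giso_def by blast
  ultimately show ?thesis unfolding giso_def by blast
qed

lemma giso_img: "giso r g A B \<Longrightarrow> g ` A = B"
  unfolding giso_def bij_betw_def by blast

context cp
begin

definition gi where "gi p q \<longleftrightarrow> (\<exists>g. giso S g (dn p) (dn q))"

lemma gi_refl: "gi p p" unfolding gi_def using giso_id by blast
lemma gi_sym: "gi p q \<Longrightarrow> gi q p" unfolding gi_def using giso_inv by blast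
lemma gi_trans: "gi p q \<Longrightarrow> gi q r \<Longrightarrow> gi p r" unfolding gi_def using giso_comp by blast

lemma dn_iff: "t \<in> dn p \<longleftrightarrow> t \<in> M0 \<and> (t, p) \<in> S\<^sup>*"
  unfolding restr_def S_eq by simp

lemma dn_self: "p \<in> M0 \<Longrightarrow> p \<in> dn p" unfolding dn_iff by simp

lemma dn_M0: "dn p \<subseteq> M0" by (auto simp: dn_iff)

lemma dn_M: "dn p \<subseteq> M" using dn_M0 M0M by blast

lemma dn_sub: "t \<in> dn p \<Longrightarrow> dn t \<subseteq> dn p"
  by (auto simp: dn_iff intro: rtrancl_trans)

lemma dn_S: "(x, y) \<in> S \<Longrightarrow> y \<in> dn p \<Longrightarrow> x \<in> dn p"
  using S_M0 converse_rtrancl_into_rtrancl by (auto simp: dn_iff)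

lemma dn_child: "(x, y) \<in> S \<Longrightarrow> x \<in> dn y"
  using S_M0 by (auto simp: dn_iff)

lemma top_char: assumes "p \<in> M0" "x \<in> dn p"
  shows "(\<exists>y\<in>dn p. (x, y) \<in> S) \<longleftrightarrow> x \<noteq> p"
proof
  assume "\<exists>y\<in>dn p. (x, y) \<in> S"
  then obtain y where y: "y \<in> dn p" "(x, y) \<in> S" by blast
  show "x \<noteq> p"
  proof
    assume "x = p"
    have "(y, p) \<in> S\<^sup>*" using y(1) by (simp add: dn_iff)
    then have "(p, p) \<in> S\<^sup>+" using y(2) \<open>x = p\<close> by (simp add: rtrancl_into_trancl2)
    then show False using acyc by blast
  qed
next
  assume ne: "x \<noteq> p"
  have "(x, p) \<in> S\<^sup>*" using assms by (simp add: dn_iff)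
  then show "\<exists>y\<in>dn p. (x, y) \<in> S"
  proof (cases rule: converse_rtranclE)
    case base then show ?thesis using ne by simp
  next
    case (step y)
    then have "y \<in> dn p" using S_M0 by (simp add: dn_iff)
    then show ?thesis using step by blast
  qed
qed

lemma giso_top: assumes "giso S g (dn p) (dn q)" "p \<in> M0" "q \<in> M0"
  shows "g p = q"
proof (rule ccontr)
  assume ne: "g p \<noteq> q"
  have gp: "g p \<in> dn q" using giso_mem[OF assms(1) dn_self[OF assms(2)]] .
  have "\<exists>y\<in>dn q. (g p, y) \<in> S" using top_char[OF assms(3) gp] ne by simp
  then obtain y where y: "y \<in> dn q" "(g p, y) \<in> S" by blast
  obtain x where x: "x \<in> dn p" "g x = y" using giso_surj[OF assms(1) y(1)] by blast
  have "(p, x) \<in> S" using giso_rel[OF assms(1) dn_self[OF assms(2)] x(1)] x y by simp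
  then have "\<exists>y\<in>dn p. (p, y) \<in> S" using x(1) by blast
  then show False using top_char[OF assms(2) dn_self[OF assms(2)]] by simp
qed

lemma giso_mono: assumes "giso S g (dn p) B" "x \<in> dn p" "t \<in> dn p" "(x, t) \<in> S\<^sup>*"
  shows "(g x, g t) \<in> S\<^sup>*"
  using assms(4,2)
proof (induction rule: converse_rtrancl_induct)
  case base then show ?case by simp
next
  case (step x x')
  have "x' \<in> dn t" using step.hyps S_M0 by (simp add: dn_iff)
  then have x': "x' \<in> dn p" using dn_sub[OF assms(3)] by blast
  have "(g x, g x') \<in> S" using giso_rel[OF assms(1) step.prems x'] step.hyps by simp
  then show ?case using step.IH[OF x'] by (meson converse_rtrancl_into_rtrancl)
qed

lemma giso_restr: assumes "giso S g (dn p) (dn q)" "t \<in> dn p"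
  shows "giso S g (dn t) (dn (g t))"
proof -
  have sub: "dn t \<subseteq> dn p" using dn_sub[OF assms(2)] .
  have gt: "g t \<in> dn q" using giso_mem[OF assms(1,2)] .
  have inj: "inj_on g (dn p)" using assms(1) unfolding giso_def bij_betw_def by blast
  have img: "g ` dn t = dn (g t)"
  proof
    show "g ` dn t \<subseteq> dn (g t)"
    proof
      fix z assume "z \<in> g ` dn t"
      then obtain x where x: "x \<in> dn t" "z = g x" by blast
      have xp: "x \<in> dn p" using x(1) sub by blast
      have "(x, t) \<in> S\<^sup>*" using x(1) by (simp add: dn_iff)
      then have "(g x, g t) \<in> S\<^sup>*" using giso_mono[OF assms(1) xp assms(2)] by blast
      moreover have "g x \<in> M0" using giso_mem[OF assms(1) xp] dn_M0 by blast
      ultimately show "z \<in> dn (g t)" using x(2) by (simp add: dn_iff)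
    qed
  next
    show "dn (g t) \<subseteq> g ` dn t"
    proof
      fix z assume z: "z \<in> dn (g t)"
      then have zq: "z \<in> dn q" using dn_sub[OF gt] by blast
      let ?h = "inv_into (dn p) g"
      have h: "giso S ?h (dn q) (dn p)" using giso_inv[OF assms(1)] .
      have "(z, g t) \<in> S\<^sup>*" using z by (simp add: dn_iff)
      then have "(?h z, ?h (g t)) \<in> S\<^sup>*" using giso_mono[OF h zq gt] by blast
      moreover have "?h (g t) = t" by (rule inv_into_f_f[OF inj assms(2)])
      moreover have "?h z \<in> dn p" using giso_mem[OF h zq] .
      moreover have "g (?h z) = z" using zq giso_img[OF assms(1)] by (metis f_inv_into_f)
      moreover have "?h z \<in> M0" using calculation(3) dn_M0 by blast
      ultimately have "?h z \<in> dn t" by (simp add: dn_iff)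
      then show "z \<in> g ` dn t" using \<open>g (?h z) = z\<close> by (metis image_eqI)
    qed
  qed
  have "giso S g (dn t) (g ` dn t)" using giso_subset[OF assms(1) sub] .
  then show ?thesis using img by simp
qed

definition NS where "NS p \<longleftrightarrow> (\<forall>t\<in>dn p. \<forall>s s'. (s, t) \<in> S \<longrightarrow> (s', t) \<in> S \<longrightarrow> gi s s' \<longrightarrow> s = s')"

lemma NS_sub: "NS p \<Longrightarrow> t \<in> dn p \<Longrightarrow> NS t"
  unfolding NS_def using dn_sub by blast

lemma rigid: assumes "p \<in> M0" "q \<in> M0" "NS p" "giso S g (dn p) (dn q)" "giso S g' (dn p) (dn q)"
  "t \<in> dn p" shows "g t = g' t"
proof -
  have "(t, p) \<in> S\<^sup>*" using assms(6) by (simp add: dn_iff)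
  then show ?thesis using assms(6)
  proof (induction rule: converse_rtrancl_induct)
    case base
    then show ?case using giso_top assms by metis
  next
    case (step t t')
    have t': "t' \<in> dn p" using step.hyps S_M0 by (simp add: dn_iff)
    have IH: "g t' = g' t'" using step.IH[OF t'] .
    let ?w = "g' t"
    have w: "?w \<in> dn q" using giso_mem[OF assms(5) step.prems] .
    obtain s where s: "s \<in> dn p" "g s = ?w" using giso_surj[OF assms(4) w] by blast
    have "(g' t, g' t') \<in> S" using giso_rel[OF assms(5) step.prems t'] step.hyps by simp
    then have "(g s, g t') \<in> S" using s IH by simp
    then have st: "(s, t') \<in> S" using giso_rel[OF assms(4) s(1) t'] by simp
    have "gi s ?w" using giso_restr[OF assms(4) s(1)] s unfolding gi_def by auto
    moreover have "gi t ?w" using giso_restr[OF assms(5) step.prems] unfolding gi_def by auto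
    ultimately have "gi t s" using gi_sym gi_trans by blast
    then have "t = s" using assms(3) t' step.hyps st unfolding NS_def by blast
    then show ?case using s by simp
  qed
qed

end

context cp
begin

definition isob where "isob G y z \<longleftrightarrow>
        (\<forall>p\<in>G. \<exists>u\<in>dn y. \<exists>v\<in>dn z. p = kpair E M u v) \<and>
        (\<forall>u\<in>dn y. \<exists>!v. v \<in> dn z \<and> kpair E M u v \<in> G) \<and>
        (\<forall>v\<in>dn z. \<exists>!u. u \<in> dn y \<and> kpair E M u v \<in> G) \<and>
        (\<forall>u\<in>dn y. \<forall>u'\<in>dn y. \<forall>v\<in>dn z. \<forall>v'\<in>dn z.
           kpair E M u v \<in> G \<longrightarrow> kpair E M u' v' \<in> G \<longrightarrow>
           (kpair E M u u' \<in> R \<longleftrightarrow> kpair E M v v' \<in> R))"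

lemma iso_in_iff: "iso_in E M C M0 R y z \<longleftrightarrow> (\<exists>G\<in>C. isob G y z)"
  unfolding iso_in_def isob_def by (rule refl)

lemma S_kp: "x \<in> dn y \<Longrightarrow> x' \<in> dn z \<Longrightarrow> (x, x') \<in> S \<longleftrightarrow> kpair E M x x' \<in> R"
  using dn_M crel_iff by blast

lemma H1: assumes "isob G y z"
  shows "\<exists>h. giso S h (dn y) (dn z) \<and> (\<forall>u\<in>dn y. kpair E M u (h u) \<in> G) \<and>
             (\<forall>x\<in>G. \<exists>u\<in>dn y. x = kpair E M u (h u))"
proof -
  have c1: "\<forall>p\<in>G. \<exists>u\<in>dn y. \<exists>v\<in>dn z. p = kpair E M u v"
   and c2: "\<forall>u\<in>dn y. \<exists>!v. v \<in> dn z \<and> kpair E M u v \<in> G"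
   and c3: "\<forall>v\<in>dn z. \<exists>!u. u \<in> dn y \<and> kpair E M u v \<in> G"
   and c4: "\<forall>u\<in>dn y. \<forall>u'\<in>dn y. \<forall>v\<in>dn z. \<forall>v'\<in>dn z.
           kpair E M u v \<in> G \<longrightarrow> kpair E M u' v' \<in> G \<longrightarrow>
           (kpair E M u u' \<in> R \<longleftrightarrow> kpair E M v v' \<in> R)"
    using assms[unfolded isob_def] by auto
  define h where "h u = (THE v. v \<in> dn z \<and> kpair E M u v \<in> G)" for u
  have hp: "h u \<in> dn z \<and> kpair E M u (h u) \<in> G" if "u \<in> dn y" for u
    unfolding h_def using c2 that by (metis (no_types, lifting) theI')
  have hu: "v = h u" if "u \<in> dn y" "v \<in> dn z" "kpair E M u v \<in> G" for u v
    using c2 that hp by blast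
  have inj: "inj_on h (dn y)"
  proof (rule inj_onI)
    fix u u' assume "u \<in> dn y" "u' \<in> dn y" "h u = h u'"
    then show "u = u'" using c3 hp by metis
  qed
  have img: "h ` dn y = dn z"
  proof
    show "h ` dn y \<subseteq> dn z" using hp by blast
  next
    show "dn z \<subseteq> h ` dn y"
    proof
      fix v assume v: "v \<in> dn z"
      then obtain u where "u \<in> dn y" "kpair E M u v \<in> G" using c3 by blast
      then show "v \<in> h ` dn y" using hu v by blast
    qed
  qed
  have rel: "\<forall>x\<in>dn y. \<forall>x'\<in>dn y. (x, x') \<in> S \<longleftrightarrow> (h x, h x') \<in> S"
  proof (intro ballI)
    fix x x' assume x: "x \<in> dn y" "x' \<in> dn y"
    have "(x, x') \<in> S \<longleftrightarrow> kpair E M x x' \<in> R" using S_kp x by blast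
    also have "\<dots> \<longleftrightarrow> kpair E M (h x) (h x') \<in> R" using c4 x hp by blast
    also have "\<dots> \<longleftrightarrow> (h x, h x') \<in> S" using S_kp hp x by blast
    finally show "(x, x') \<in> S \<longleftrightarrow> (h x, h x') \<in> S" .
  qed
  have "giso S h (dn y) (dn z)" unfolding giso_def bij_betw_def using inj img rel by blast
  moreover have "\<forall>x\<in>G. \<exists>u\<in>dn y. x = kpair E M u (h u)"
  proof
    fix x assume "x \<in> G"
    then obtain u v where "u \<in> dn y" "v \<in> dn z" "x = kpair E M u v" using c1 by blast
    then show "\<exists>u\<in>dn y. x = kpair E M u (h u)" using hu \<open>x \<in> G\<close> by blast
  qed
  ultimately show ?thesis using hp by blast
qed

lemma kp_inj_dn: "u \<in> dn y \<Longrightarrow> v \<in> dn z \<Longrightarrow> u' \<in> dn y' \<Longrightarrow> v' \<in> dn z' \<Longrightarrow>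
   kpair E M u v = kpair E M u' v' \<Longrightarrow> u = u' \<and> v = v'"
  using kpair_inj dn_M by (meson subsetD)

lemma H2: assumes "giso S g (dn y) (dn z)"
  shows "isob ((\<lambda>u. kpair E M u (g u)) ` dn y) y z"
proof -
  let ?G = "(\<lambda>u. kpair E M u (g u)) ` dn y"
  have gm: "g u \<in> dn z" if "u \<in> dn y" for u using giso_mem[OF assms that] .
  have mem: "kpair E M u v \<in> ?G \<longleftrightarrow> v = g u" if "u \<in> dn y" "v \<in> dn z" for u v
  proof
    assume "kpair E M u v \<in> ?G"
    then obtain u' where u': "u' \<in> dn y" "kpair E M u v = kpair E M u' (g u')" by blast
    then show "v = g u" using kp_inj_dn[OF that u'(1) gm[OF u'(1)] u'(2)] by simp
  next
    assume "v = g u" then show "kpair E M u v \<in> ?G" using that by blast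
  qed
  have "\<forall>p\<in>?G. \<exists>u\<in>dn y. \<exists>v\<in>dn z. p = kpair E M u v" using gm by blast
  moreover have "\<forall>u\<in>dn y. \<exists>!v. v \<in> dn z \<and> kpair E M u v \<in> ?G"
    using mem gm by blast
  moreover have "\<forall>v\<in>dn z. \<exists>!u. u \<in> dn y \<and> kpair E M u v \<in> ?G"
  proof
    fix v assume v: "v \<in> dn z"
    obtain u where u: "u \<in> dn y" "g u = v" using giso_surj[OF assms v] by blast
    show "\<exists>!u. u \<in> dn y \<and> kpair E M u v \<in> ?G"
    proof
      show "u \<in> dn y \<and> kpair E M u v \<in> ?G" using u mem v by blast
    next
      fix u' assume "u' \<in> dn y \<and> kpair E M u' v \<in> ?G"
      then show "u' = u" using mem v u giso_inj[OF assms] by metis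
    qed
  qed
  moreover have "\<forall>u\<in>dn y. \<forall>u'\<in>dn y. \<forall>v\<in>dn z. \<forall>v'\<in>dn z.
           kpair E M u v \<in> ?G \<longrightarrow> kpair E M u' v' \<in> ?G \<longrightarrow>
           (kpair E M u u' \<in> R \<longleftrightarrow> kpair E M v v' \<in> R)"
  proof (intro ballI impI)
    fix u u' v v' assume h: "u \<in> dn y" "u' \<in> dn y" "v \<in> dn z" "v' \<in> dn z"
      "kpair E M u v \<in> ?G" "kpair E M u' v' \<in> ?G"
    then have "v = g u" "v' = g u'" using mem by blast+
    then show "kpair E M u u' \<in> R \<longleftrightarrow> kpair E M v v' \<in> R"
      using giso_rel[OF assms h(1,2)] S_kp h by metis
  qed
  ultimately show ?thesis unfolding isob_def by blast
qed

end

context cp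
begin

definition dfn :: "((nat \<Rightarrow> 'a) \<Rightarrow> (nat \<Rightarrow> 'a set) \<Rightarrow> bool) \<Rightarrow> bool" where
  "dfn P \<longleftrightarrow> (\<exists>\<phi>. \<forall>s c. assignment M C s c \<longrightarrow> (sat E M C s c \<phi> \<longleftrightarrow> P s c))"

lemma dfn_cong: "dfn P \<Longrightarrow> (\<And>s c. assignment M C s c \<Longrightarrow> P s c = Q s c) \<Longrightarrow> dfn Q"
  unfolding dfn_def by metis

lemma dfn_mem: "dfn (\<lambda>s c. E (s i) (s j))"
  unfolding dfn_def by (rule exI[of _ "SMem i j"]) simp

lemma dfn_eq: "dfn (\<lambda>s c. s i = s j)"
  unfolding dfn_def by (rule exI[of _ "SEq i j"]) simp

lemma dfn_cmem: "dfn (\<lambda>s c. s i \<in> c J)"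
  unfolding dfn_def by (rule exI[of _ "CMem i J"]) simp

lemma dfn_neg: "dfn P \<Longrightarrow> dfn (\<lambda>s c. \<not> P s c)"
  unfolding dfn_def by (metis sat.simps(4))

lemma dfn_conj: "dfn P \<Longrightarrow> dfn Q \<Longrightarrow> dfn (\<lambda>s c. P s c \<and> Q s c)"
  unfolding dfn_def by (metis sat.simps(5))

lemma dfn_disj: "dfn P \<Longrightarrow> dfn Q \<Longrightarrow> dfn (\<lambda>s c. P s c \<or> Q s c)"
proof -
  assume "dfn P" "dfn Q"
  then have "dfn (\<lambda>s c. \<not> (\<not> P s c \<and> \<not> Q s c))" by (intro dfn_neg dfn_conj)
  then show ?thesis by (rule dfn_cong) simp
qed

lemma dfn_imp: "dfn P \<Longrightarrow> dfn Q \<Longrightarrow> dfn (\<lambda>s c. P s c \<longrightarrow> Q s c)"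
proof -
  assume "dfn P" "dfn Q"
  then have "dfn (\<lambda>s c. \<not> (P s c \<and> \<not> Q s c))" by (intro dfn_neg dfn_conj)
  then show ?thesis by (rule dfn_cong) simp
qed

lemma dfn_iff: "dfn P \<Longrightarrow> dfn Q \<Longrightarrow> dfn (\<lambda>s c. P s c \<longleftrightarrow> Q s c)"
proof -
  assume "dfn P" "dfn Q"
  then have "dfn (\<lambda>s c. (P s c \<longrightarrow> Q s c) \<and> (Q s c \<longrightarrow> P s c))" by (intro dfn_imp dfn_conj)
  then show ?thesis by (rule dfn_cong) blast
qed

lemma assign_upd: "assignment M C s c \<Longrightarrow> u \<in> M \<Longrightarrow> assignment M C (s(i := u)) c"
  unfolding assignment_def by auto

lemma assign_updC: "assignment M C s c \<Longrightarrow> A \<in> C \<Longrightarrow> assignment M C s (c(J := A))"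
  unfolding assignment_def by auto

lemma dfn_exS: assumes "dfn (\<lambda>s c. P s c (s i))" "\<And>s c u x. P (s(i := x)) c u = P s c u"
  shows "dfn (\<lambda>s c. \<exists>u\<in>M. P s c u)"
proof -
  obtain \<phi> where phi: "\<And>s c. assignment M C s c \<Longrightarrow> sat E M C s c \<phi> \<longleftrightarrow> P s c (s i)"
    using assms(1) unfolding dfn_def by blast
  have "sat E M C s c (ExS i \<phi>) \<longleftrightarrow> (\<exists>u\<in>M. P s c u)" if "assignment M C s c" for s c
  proof -
    have "sat E M C s c (ExS i \<phi>) \<longleftrightarrow> (\<exists>u\<in>M. sat E M C (s(i := u)) c \<phi>)" by simp
    also have "\<dots> \<longleftrightarrow> (\<exists>u\<in>M. P (s(i := u)) c u)"
      using phi assign_upd[OF that] by (metis fun_upd_same)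
    also have "\<dots> \<longleftrightarrow> (\<exists>u\<in>M. P s c u)" using assms(2) by simp
    finally show ?thesis .
  qed
  then show ?thesis unfolding dfn_def by blast
qed

lemma dfn_allS: assumes "dfn (\<lambda>s c. P s c (s i))" "\<And>s c u x. P (s(i := x)) c u = P s c u"
  shows "dfn (\<lambda>s c. \<forall>u\<in>M. P s c u)"
proof -
  have "dfn (\<lambda>s c. \<not> (\<exists>u\<in>M. \<not> P s c u))"
    by (rule dfn_neg, rule dfn_exS[where i=i], rule dfn_neg, rule assms(1)) (simp add: assms(2))
  then show ?thesis by (rule dfn_cong) blast
qed

lemma dfn_exC: assumes "dfn (\<lambda>s c. P s c (c J))" "\<And>s c A B. P s (c(J := B)) A = P s c A"
  shows "dfn (\<lambda>s c. \<exists>A\<in>C. P s c A)"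
proof -
  obtain \<phi> where phi: "\<And>s c. assignment M C s c \<Longrightarrow> sat E M C s c \<phi> \<longleftrightarrow> P s c (c J)"
    using assms(1) unfolding dfn_def by blast
  have "sat E M C s c (ExC J \<phi>) \<longleftrightarrow> (\<exists>A\<in>C. P s c A)" if "assignment M C s c" for s c
  proof -
    have "sat E M C s c (ExC J \<phi>) \<longleftrightarrow> (\<exists>A\<in>C. sat E M C s (c(J := A)) \<phi>)" by simp
    also have "\<dots> \<longleftrightarrow> (\<exists>A\<in>C. P s (c(J := A)) A)"
      using phi assign_updC[OF that] by (metis fun_upd_same)
    also have "\<dots> \<longleftrightarrow> (\<exists>A\<in>C. P s c A)" using assms(2) by simp
    finally show ?thesis .
  qed
  then show ?thesis unfolding dfn_def by blast
qed

lemma dfn_allC: assumes "dfn (\<lambda>s c. P s c (c J))" "\<And>s c A B. P s (c(J := B)) A = P s c A"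
  shows "dfn (\<lambda>s c. \<forall>A\<in>C. P s c A)"
proof -
  have "dfn (\<lambda>s c. \<not> (\<exists>A\<in>C. \<not> P s c A))"
    by (rule dfn_neg, rule dfn_exC[where J=J], rule dfn_neg, rule assms(1)) (simp add: assms(2))
  then show ?thesis by (rule dfn_cong) blast
qed

lemma upair_char: "x \<in> M \<Longrightarrow> y \<in> M \<Longrightarrow> w \<in> M \<Longrightarrow>
   w = upair E M x y \<longleftrightarrow> (\<forall>z\<in>M. E z w \<longleftrightarrow> z = x \<or> z = y)"
  using upair[of x y] extM by metis

lemma dfn_upair: "dfn (\<lambda>s c. s k = upair E M (s i) (s j))"
proof -
  have "dfn (\<lambda>s c. \<forall>z\<in>M. E z (s k) \<longleftrightarrow> z = s i \<or> z = s j)"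
    apply (rule dfn_allS[where i="i+j+k+1"])
     apply (intro dfn_iff dfn_disj dfn_mem dfn_eq)
    by simp
  then show ?thesis
    by (rule dfn_cong) (simp add: assignment_def upair_char[symmetric] range_subsetD)
qed

lemma dfn_kpeq: "dfn (\<lambda>s c. s k = kpair E M (s i) (s j))"
proof -
  have "dfn (\<lambda>s c. \<exists>p\<in>M. \<exists>q\<in>M. p = upair E M (s i) (s i) \<and> q = upair E M (s i) (s j)
           \<and> s k = upair E M p q)"
    apply (rule dfn_exS[where i="i+j+k+1"])
     apply (rule dfn_exS[where i="i+j+k+2"])
      apply (intro dfn_conj dfn_upair)
    by simp_all
  then show ?thesis
    by (rule dfn_cong) (auto simp: assignment_def kpair_def upair_M range_subsetD)
qed

lemma dfn_kpmem: "dfn (\<lambda>s c. kpair E M (s i) (s j) \<in> c J)"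
proof -
  have "dfn (\<lambda>s c. \<exists>w\<in>M. w = kpair E M (s i) (s j) \<and> w \<in> c J)"
    apply (rule dfn_exS[where i="i+j+1"])
     apply (intro dfn_conj dfn_kpeq dfn_cmem)
    by simp_all
  then show ?thesis
    by (rule dfn_cong) (auto simp: assignment_def kpair_M range_subsetD)
qed

end

context cp
begin

lemma aM: "a \<in> M" using cp3 M0M by blast

lemma compr_ex: assumes "assignment M C s c" "dfn P"
  shows "\<exists>X\<in>C. X = {u\<in>M. P (s(0 := u)) c}"
proof -
  obtain \<phi> where phi: "\<And>s c. assignment M C s c \<Longrightarrow> sat E M C s c \<phi> \<longleftrightarrow> P s c"
    using assms(2) unfolding dfn_def by blast
  obtain X where X: "X \<in> C" "\<forall>u\<in>M. u \<in> X \<longleftrightarrow> sat E M C (s(0 := u)) c \<phi>"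
    using compr[OF assms(1)] by blast
  have "X = {u\<in>M. P (s(0 := u)) c}"
    using X class_sub[OF X(1)] phi assign_upd[OF assms(1)] by blast
  then show ?thesis using X(1) by blast
qed

lemma empty_C: "{} \<in> C"
proof -
  have as: "assignment M C (\<lambda>_. a) (\<lambda>_. M0)" unfolding assignment_def using aM cp1 by auto
  have "dfn (\<lambda>s c. \<not> (s 0 = s 0))" by (intro dfn_neg dfn_eq)
  from compr_ex[OF as this] show ?thesis by simp
qed

lemma insert_C: assumes "X \<in> C" "t \<in> M" shows "insert t X \<in> C"
proof -
  have as: "assignment M C (\<lambda>_. t) (\<lambda>_. X)" unfolding assignment_def using assms by auto
  have "dfn (\<lambda>s c. s 0 \<in> c 0 \<or> s 0 = s 1)" by (intro dfn_disj dfn_eq dfn_cmem)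
  from compr_ex[OF as this] obtain Y where "Y \<in> C" "Y = {u \<in> M. u \<in> X \<or> u = t}" by auto
  moreover have "{u \<in> M. u \<in> X \<or> u = t} = insert t X" using class_sub[OF assms(1)] assms(2) by auto
  ultimately show ?thesis by simp
qed

lemma finite_C: "finite X \<Longrightarrow> X \<subseteq> M \<Longrightarrow> X \<in> C"
proof (induction X rule: finite_induct)
  case empty then show ?case using empty_C by simp
next
  case (insert x F) then show ?case using insert_C by simp
qed

definition indp where "indp X0 X1 u y \<longleftrightarrow> u \<in> X0 \<and>
   (\<forall>A\<in>C. (u \<in> A \<and> (\<forall>w\<in>M. \<forall>w'\<in>M. w \<in> A \<longrightarrow> kpair E M w w' \<in> X1 \<longrightarrow> w' \<in> A)) \<longrightarrow> y \<in> A)"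

lemma dfn_indp: "dfn (\<lambda>s c. indp (c K0) (c K1) (s i) (s j))"
  unfolding indp_def
  apply (intro dfn_conj dfn_cmem)
  apply (rule dfn_allC[where J="K0+K1+1"])
   apply (intro dfn_imp dfn_conj dfn_cmem)
    apply (rule dfn_allS[where i="i+j+1"])
     apply (rule dfn_allS[where i="i+j+2"])
      apply (intro dfn_imp dfn_conj dfn_cmem dfn_kpmem)
  by simp_all

lemma indp_iff: assumes "u \<in> M" "y \<in> M" shows "indp M0 R u y \<longleftrightarrow> u \<in> dn y"
proof
  assume h: "indp M0 R u y"
  then have u: "u \<in> M0" unfolding indp_def by (elim conjE)
  let ?A = "{z. (u, z) \<in> S\<^sup>*}"
  have sub: "?A \<subseteq> M0"
  proof
    fix z assume "z \<in> ?A"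
    then have "(u, z) \<in> S\<^sup>*" by simp
    then show "z \<in> M0"
    proof (induction rule: rtrancl_induct)
      case base then show ?case using u .
    next
      case (step x x') then show ?case using S_M0 by blast
    qed
  qed
  have "?A \<subseteq> M" using sub M0M by (rule subset_trans)
  then have AC: "?A \<in> C" by (rule finite_C[OF up_fin[OF u]])
  have "\<forall>w\<in>M. \<forall>w'\<in>M. w \<in> ?A \<longrightarrow> kpair E M w w' \<in> R \<longrightarrow> w' \<in> ?A"
  proof (intro ballI impI)
    fix w w' assume "w \<in> M" "w' \<in> M" "w \<in> ?A" "kpair E M w w' \<in> R"
    then have "(w, w') \<in> S" "(u, w) \<in> S\<^sup>*" by (simp_all add: crel_iff)
    then have "(u, w') \<in> S\<^sup>*" by (rule rtrancl_into_rtrancl[rotated])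
    then show "w' \<in> ?A" by simp
  qed
  moreover have "u \<in> ?A" by simp
  ultimately have "u \<in> ?A \<and> (\<forall>w\<in>M. \<forall>w'\<in>M. w \<in> ?A \<longrightarrow> kpair E M w w' \<in> R \<longrightarrow> w' \<in> ?A)"
    by blast
  moreover have "\<forall>A\<in>C. (u \<in> A \<and> (\<forall>w\<in>M. \<forall>w'\<in>M. w \<in> A \<longrightarrow> kpair E M w w' \<in> R \<longrightarrow> w' \<in> A)) \<longrightarrow> y \<in> A"
    using h unfolding indp_def by (elim conjE)
  ultimately have "y \<in> ?A" by (rule mp[OF bspec[OF _ AC], rotated])
  then show "u \<in> dn y" using u by (simp add: dn_iff)
next
  assume h: "u \<in> dn y"
  then have u: "u \<in> M0" and p: "(u, y) \<in> S\<^sup>*" by (simp_all add: dn_iff)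
  have closed: "y \<in> A" if "A \<in> C" "u \<in> A" "\<forall>w\<in>M. \<forall>w'\<in>M. w \<in> A \<longrightarrow> kpair E M w w' \<in> R \<longrightarrow> w' \<in> A" for A
    using p
  proof (induction rule: rtrancl_induct)
    case base then show ?case using that by simp
  next
    case (step x x')
    then have "x \<in> M" "x' \<in> M" "kpair E M x x' \<in> R" by (simp_all add: crel_iff)
    then show ?case using that(3) step.IH by blast
  qed
  show "indp M0 R u y" using u closed unfolding indp_def by blast
qed

end

context cp
begin

definition ob1 where "ob1 X0 X1 G y z \<longleftrightarrow>
  (\<forall>p\<in>M. p \<in> G \<longrightarrow> (\<exists>u\<in>M. indp X0 X1 u y \<and> (\<exists>v\<in>M. indp X0 X1 v z \<and> p = kpair E M u v)))"
definition ob2 where "ob2 X0 X1 G y z \<longleftrightarrow>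
  (\<forall>u\<in>M. indp X0 X1 u y \<longrightarrow> (\<exists>v\<in>M. (indp X0 X1 v z \<and> kpair E M u v \<in> G) \<and>
       (\<forall>v'\<in>M. (indp X0 X1 v' z \<and> kpair E M u v' \<in> G) \<longrightarrow> v' = v)))"
definition ob3 where "ob3 X0 X1 G y z \<longleftrightarrow>
  (\<forall>v\<in>M. indp X0 X1 v z \<longrightarrow> (\<exists>u\<in>M. (indp X0 X1 u y \<and> kpair E M u v \<in> G) \<and>
       (\<forall>u'\<in>M. (indp X0 X1 u' y \<and> kpair E M u' v \<in> G) \<longrightarrow> u' = u)))"
definition ob4 where "ob4 X0 X1 G y z \<longleftrightarrow>
  (\<forall>u\<in>M. \<forall>u'\<in>M. \<forall>v\<in>M. \<forall>v'\<in>M. indp X0 X1 u y \<longrightarrow> indp X0 X1 u' y \<longrightarrow>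
     indp X0 X1 v z \<longrightarrow> indp X0 X1 v' z \<longrightarrow> kpair E M u v \<in> G \<longrightarrow> kpair E M u' v' \<in> G \<longrightarrow>
     (kpair E M u u' \<in> X1 \<longleftrightarrow> kpair E M v v' \<in> X1))"
definition isobp where "isobp X0 X1 G y z \<longleftrightarrow>
  ob1 X0 X1 G y z \<and> ob2 X0 X1 G y z \<and> ob3 X0 X1 G y z \<and> ob4 X0 X1 G y z"

lemma dfn_ob1: "dfn (\<lambda>s c. ob1 (c K0) (c K1) (c K2) (s i) (s j))"
  unfolding ob1_def
  apply (rule dfn_allS[where i="i+j+1"])
   apply (intro dfn_imp dfn_cmem)
   apply (rule dfn_exS[where i="i+j+2"])
    apply (intro dfn_conj dfn_indp)
    apply (rule dfn_exS[where i="i+j+3"])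
     apply (intro dfn_conj dfn_indp dfn_kpeq)
  by simp_all

lemma dfn_ob2: "dfn (\<lambda>s c. ob2 (c K0) (c K1) (c K2) (s i) (s j))"
  unfolding ob2_def
  apply (rule dfn_allS[where i="i+j+1"])
   apply (intro dfn_imp dfn_indp)
   apply (rule dfn_exS[where i="i+j+2"])
    apply (intro dfn_conj dfn_indp dfn_kpmem)
    apply (rule dfn_allS[where i="i+j+3"])
     apply (intro dfn_imp dfn_conj dfn_indp dfn_kpmem dfn_eq)
  by simp_all

lemma dfn_ob3: "dfn (\<lambda>s c. ob3 (c K0) (c K1) (c K2) (s i) (s j))"
  unfolding ob3_def
  apply (rule dfn_allS[where i="i+j+1"])
   apply (intro dfn_imp dfn_indp)
   apply (rule dfn_exS[where i="i+j+2"])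
    apply (intro dfn_conj dfn_indp dfn_kpmem)
    apply (rule dfn_allS[where i="i+j+3"])
     apply (intro dfn_imp dfn_conj dfn_indp dfn_kpmem dfn_eq)
  by simp_all

lemma dfn_ob4: "dfn (\<lambda>s c. ob4 (c K0) (c K1) (c K2) (s i) (s j))"
  unfolding ob4_def
  apply (rule dfn_allS[where i="i+j+1"])
   apply (rule dfn_allS[where i="i+j+2"])
    apply (rule dfn_allS[where i="i+j+3"])
     apply (rule dfn_allS[where i="i+j+4"])
      apply (intro dfn_imp dfn_iff dfn_indp dfn_kpmem)
  by simp_all

lemma dfn_isobp: "dfn (\<lambda>s c. isobp (c K0) (c K1) (c K2) (s i) (s j))"
  unfolding isobp_def by (intro dfn_conj dfn_ob1 dfn_ob2 dfn_ob3 dfn_ob4)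

lemma eu_M: assumes "D \<subseteq> M" "D' \<subseteq> M"
  shows "(\<forall>u\<in>M. u \<in> D \<longrightarrow> (\<exists>v\<in>M. v \<in> D' \<and> P u v \<and> (\<forall>v'\<in>M. v' \<in> D' \<and> P u v' \<longrightarrow> v' = v)))
      \<longleftrightarrow> (\<forall>u\<in>D. \<exists>!v. v \<in> D' \<and> P u v)"
proof
  assume h: "\<forall>u\<in>M. u \<in> D \<longrightarrow> (\<exists>v\<in>M. v \<in> D' \<and> P u v \<and> (\<forall>v'\<in>M. v' \<in> D' \<and> P u v' \<longrightarrow> v' = v))"
  show "\<forall>u\<in>D. \<exists>!v. v \<in> D' \<and> P u v"
  proof
    fix u assume u: "u \<in> D"
    then have "u \<in> M" using assms(1) by blast
    then obtain v where v: "v \<in> M" "v \<in> D' \<and> P u v" "\<forall>v'\<in>M. (v' \<in> D' \<and> P u v') \<longrightarrow> v' = v"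
      using h u by blast
    show "\<exists>!v. v \<in> D' \<and> P u v"
    proof (rule ex1I[of _ v])
      show "v \<in> D' \<and> P u v" using v(2) .
    next
      fix v' assume "v' \<in> D' \<and> P u v'"
      moreover then have "v' \<in> M" using assms(2) by blast
      ultimately show "v' = v" using v(3) by blast
    qed
  qed
next
  assume h: "\<forall>u\<in>D. \<exists>!v. v \<in> D' \<and> P u v"
  show "\<forall>u\<in>M. u \<in> D \<longrightarrow> (\<exists>v\<in>M. v \<in> D' \<and> P u v \<and> (\<forall>v'\<in>M. v' \<in> D' \<and> P u v' \<longrightarrow> v' = v))"
  proof (intro ballI impI)
    fix u assume "u \<in> M" "u \<in> D"
    then obtain v where v: "v \<in> D' \<and> P u v" "\<And>v'. v' \<in> D' \<and> P u v' \<Longrightarrow> v' = v"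
      using h by blast
    have "v \<in> M" using v(1) assms(2) by blast
    then show "\<exists>v\<in>M. v \<in> D' \<and> P u v \<and> (\<forall>v'\<in>M. v' \<in> D' \<and> P u v' \<longrightarrow> v' = v)"
      using v by blast
  qed
qed

lemma isobp_iff: assumes "G \<in> C" "y \<in> M" "z \<in> M"
  shows "isobp M0 R G y z \<longleftrightarrow> isob G y z"
proof -
  have GM: "G \<subseteq> M" using class_sub assms(1) .
  have dM: "\<And>t. dn t \<subseteq> M" using dn_M .
  have 1: "ob1 M0 R G y z \<longleftrightarrow> (\<forall>p\<in>G. \<exists>u\<in>dn y. \<exists>v\<in>dn z. p = kpair E M u v)"
    unfolding ob1_def using assms GM dM by (simp add: indp_iff) blast
  have 2: "ob2 M0 R G y z \<longleftrightarrow> (\<forall>u\<in>dn y. \<exists>!v. v \<in> dn z \<and> kpair E M u v \<in> G)"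
    unfolding ob2_def using assms by (simp add: indp_iff) (rule eu_M[OF dM dM])
  have 3: "ob3 M0 R G y z \<longleftrightarrow> (\<forall>v\<in>dn z. \<exists>!u. u \<in> dn y \<and> kpair E M u v \<in> G)"
    unfolding ob3_def using assms by (simp add: indp_iff) (rule eu_M[OF dM dM])
  have 4: "ob4 M0 R G y z \<longleftrightarrow> (\<forall>u\<in>dn y. \<forall>u'\<in>dn y. \<forall>v\<in>dn z. \<forall>v'\<in>dn z.
           kpair E M u v \<in> G \<longrightarrow> kpair E M u' v' \<in> G \<longrightarrow>
           (kpair E M u u' \<in> R \<longleftrightarrow> kpair E M v v' \<in> R))"
    unfolding ob4_def using assms GM dM by (simp add: indp_iff) blast
  show ?thesis unfolding isobp_def isob_def 1 2 3 4 ..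
qed

definition fdefp where "fdefp X0 X1 z p q \<longleftrightarrow> z = kpair E M p q \<or>
   (\<exists>G\<in>C. \<exists>y\<in>M. \<exists>w\<in>M. kpair E M y p \<in> X1 \<and> kpair E M w q \<in> X1 \<and> isobp X0 X1 G y w \<and> z \<in> G)"

lemma dfn_fdefp: "dfn (\<lambda>s c. fdefp (c 0) (c 1) (s 0) (s 1) (s 2))"
  unfolding fdefp_def
  apply (intro dfn_disj dfn_kpeq)
  apply (rule dfn_exC[where J=2])
   apply (rule dfn_exS[where i=3])
    apply (rule dfn_exS[where i=4])
     apply (intro dfn_conj dfn_kpmem dfn_isobp dfn_cmem)
  by simp_all

lemma F_class: assumes "p \<in> M" "q \<in> M"
  shows "{z\<in>M. z = kpair E M p q \<or> (\<exists>G\<in>C. \<exists>y w. (y, p) \<in> S \<and> (w, q) \<in> S \<and> isob G y w \<and> z \<in> G)} \<in> C"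
proof -
  let ?s = "\<lambda>n::nat. if n = 2 then q else p"
  let ?c = "\<lambda>n::nat. if n = 0 then M0 else R"
  have as: "assignment M C ?s ?c" unfolding assignment_def using assms cp1 cp2 by auto
  obtain X where X: "X \<in> C" "X = {u\<in>M. fdefp M0 R u p q}"
    using compr_ex[OF as dfn_fdefp] by auto
  have "fdefp M0 R u p q \<longleftrightarrow> (u = kpair E M p q \<or> (\<exists>G\<in>C. \<exists>y w. (y, p) \<in> S \<and> (w, q) \<in> S \<and> isob G y w \<and> u \<in> G))"
    for u
  proof -
    have "fdefp M0 R u p q \<longleftrightarrow> (u = kpair E M p q \<or> (\<exists>G\<in>C. \<exists>y\<in>M. \<exists>w\<in>M. kpair E M y p \<in> R \<and> kpair E M w q \<in> R \<and> isob G y w \<and> u \<in> G))"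
      unfolding fdefp_def using isobp_iff by (metis (no_types, lifting))
    also have "\<dots> \<longleftrightarrow> (u = kpair E M p q \<or> (\<exists>G\<in>C. \<exists>y w. (y, p) \<in> S \<and> (w, q) \<in> S \<and> isob G y w \<and> u \<in> G))"
      using assms by (auto simp: crel_iff)
    finally show ?thesis .
  qed
  then show ?thesis using X by simp
qed

end

context cp
begin

lemma dn_decomp: assumes "t \<in> dn p" "t \<noteq> p"
  shows "\<exists>y. (y, p) \<in> S \<and> t \<in> dn y"
proof -
  have t: "t \<in> M0" "(t, p) \<in> S\<^sup>*" using assms(1) by (simp_all add: dn_iff)
  from t(2) show ?thesis
  proof (cases rule: rtranclE)
    case base then show ?thesis using assms(2) by simp
  next
    case (step y)
    then have "t \<in> dn y" using t(1) by (simp add: dn_iff)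
    then show ?thesis using step by blast
  qed
qed

lemma below_top: assumes "giso S f (dn p) (dn v)" "p \<in> M0" "v \<in> M0" "t \<in> dn p" "t \<noteq> p"
  shows "(f t, v) \<in> S\<^sup>+ \<and> gi t (f t)"
proof -
  have fp: "f p = v" using giso_top assms by blast
  have ft: "f t \<in> dn v" using giso_mem[OF assms(1,4)] .
  have "f t \<noteq> v" using giso_inj[OF assms(1) assms(4) dn_self[OF assms(2)]] fp assms(5) by metis
  moreover have "(f t, v) \<in> S\<^sup>*" using ft by (simp add: dn_iff)
  ultimately have "(f t, v) \<in> S\<^sup>+" by (meson rtranclD)
  moreover have "gi t (f t)" using giso_restr[OF assms(1,4)] unfolding gi_def by blast
  ultimately show ?thesis by blast
qed

lemma cpb: "t \<in> M0 \<Longrightarrow> s \<in> M0 \<Longrightarrow> s' \<in> M0 \<Longrightarrow> s \<noteq> s' \<Longrightarrow> (s, t) \<in> S \<Longrightarrow> (s', t) \<in> S \<Longrightarrow>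
   \<not> iso_in E M C M0 R s s'"
  using cp6 by blast

lemma main_aux: "v \<in> M0 \<longrightarrow> (\<forall>p\<in>M0. \<forall>q\<in>M0. gi v p \<longrightarrow> gi v q \<longrightarrow> iso_in E M C M0 R p q)"
proof (rule wf_induct[OF wf_trancl[OF wfS], of "\<lambda>v. v \<in> M0 \<longrightarrow> (\<forall>p\<in>M0. \<forall>q\<in>M0. gi v p \<longrightarrow> gi v q \<longrightarrow> iso_in E M C M0 R p q)"])
  fix v assume IH0: "\<forall>y. (y, v) \<in> S\<^sup>+ \<longrightarrow> y \<in> M0 \<longrightarrow> (\<forall>p\<in>M0. \<forall>q\<in>M0. gi y p \<longrightarrow> gi y q \<longrightarrow> iso_in E M C M0 R p q)"
  show "v \<in> M0 \<longrightarrow> (\<forall>p\<in>M0. \<forall>q\<in>M0. gi v p \<longrightarrow> gi v q \<longrightarrow> iso_in E M C M0 R p q)"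
  proof (intro impI ballI)
  fix p q assume h1: "v \<in> M0" and h2: "p \<in> M0" and h3: "q \<in> M0" and h4: "gi v p" and h5: "gi v q"
  note 1 = IH0 h1 h2 h3 h4 h5
  have IH: "iso_in E M C M0 R p' q'" if "(v', v) \<in> S\<^sup>+" "v' \<in> M0" "p' \<in> M0" "q' \<in> M0"
    "gi v' p'" "gi v' q'" for v' p' q'
    using IH0[rule_format, OF that] .
  have NSr: "NS r" if r: "r \<in> M0" "gi v r" for r
  proof -
    obtain f where f: "giso S f (dn r) (dn v)" using gi_sym[OF r(2)] unfolding gi_def by blast
    show "NS r" unfolding NS_def
    proof (intro ballI allI impI)
      fix t s s' assume h: "t \<in> dn r" "(s, t) \<in> S" "(s', t) \<in> S" "gi s s'"
      have sr: "s \<in> dn r" using dn_S h by blast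
      have "s \<noteq> r" using top_char[OF r(1) sr] h(1,2) by blast
      then have b: "(f s, v) \<in> S\<^sup>+" "gi s (f s)" using below_top[OF f r(1) 1(2) sr] by blast+
      have M: "f s \<in> M0" "s \<in> M0" "s' \<in> M0" "t \<in> M0" using giso_mem[OF f sr] dn_M0 h S_M0 by blast+
      have "iso_in E M C M0 R s s'"
        using IH[OF b(1) M(1) M(2) M(3)] gi_sym[OF b(2)] gi_trans[OF gi_sym[OF b(2)] h(4)] by blast
      then show "s = s'" using cpb[OF M(4) M(2) M(3) _ h(2) h(3)] by blast
    qed
  qed
  have NSp: "NS p" using NSr[OF 1(3) 1(5)] .
  have NSq: "NS q" using NSr[OF 1(4) 1(6)] .
  obtain fp where fp: "giso S fp (dn p) (dn v)" using gi_sym[OF 1(5)] unfolding gi_def by blast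
  obtain g where g: "giso S g (dn p) (dn q)" using gi_trans[OF gi_sym[OF 1(5)] 1(6)] unfolding gi_def by blast
  have gp: "g p = q" using giso_top[OF g 1(3) 1(4)] .
  have pM: "p \<in> M" "q \<in> M" using 1 M0M by blast+
  let ?F = "{z\<in>M. z = kpair E M p q \<or> (\<exists>G\<in>C. \<exists>y w. (y, p) \<in> S \<and> (w, q) \<in> S \<and> isob G y w \<and> z \<in> G)}"
  have FC: "?F \<in> C" using F_class[OF pM] .
  have Feq: "?F = (\<lambda>u. kpair E M u (g u)) ` dn p"
  proof
    show "?F \<subseteq> (\<lambda>u. kpair E M u (g u)) ` dn p"
    proof
      fix z assume z: "z \<in> ?F"
      show "z \<in> (\<lambda>u. kpair E M u (g u)) ` dn p"
      proof (cases "z = kpair E M p q")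
        case True
        then show ?thesis using gp dn_self[OF 1(3)] by (intro image_eqI[where x=p]) simp_all
      next
        case False
        have "\<exists>G\<in>C. \<exists>y w. (y, p) \<in> S \<and> (w, q) \<in> S \<and> isob G y w \<and> z \<in> G"
          using z False by simp
        then obtain G y w where G: "G \<in> C" "(y, p) \<in> S" "(w, q) \<in> S" "isob G y w" "z \<in> G"
          by blast
        obtain h where h: "giso S h (dn y) (dn w)" "\<forall>x\<in>G. \<exists>u\<in>dn y. x = kpair E M u (h u)"
          using H1[OF G(4)] by blast
        have yp: "y \<in> dn p" using dn_S[OF G(2) dn_self[OF 1(3)]] .
        have yM: "y \<in> M0" "w \<in> M0" using G S_M0 by blast+
        have gy: "(g y, q) \<in> S" using giso_rel[OF g yp dn_self[OF 1(3)]] G(2) gp by simp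
        have A: "gi y (g y)" using giso_restr[OF g yp] unfolding gi_def by blast
        have B: "gi y w" using h(1) unfolding gi_def by blast
        have "gi (g y) w" using gi_trans[OF gi_sym[OF A] B] .
        moreover have "\<forall>s s'. (s, q) \<in> S \<longrightarrow> (s', q) \<in> S \<longrightarrow> gi s s' \<longrightarrow> s = s'"
          using NSq dn_self[OF 1(4)] unfolding NS_def by blast
        ultimately have gyw: "g y = w" using gy G(3) by blast
        have g': "giso S g (dn y) (dn w)" using giso_restr[OF g yp] gyw by simp
        have NSy: "NS y" using NS_sub[OF NSp yp] .
        obtain u where u: "u \<in> dn y" "z = kpair E M u (h u)" using h(2) G(5) by blast
        have hg: "h u = g u" using rigid[OF yM(1) yM(2) NSy h(1) g' u(1)] .
        have up: "u \<in> dn p" using dn_sub[OF yp] u(1) by blast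
        show ?thesis using u(2) hg up by (intro image_eqI[where x=u]) simp_all
      qed
    qed
  next
    show "(\<lambda>u. kpair E M u (g u)) ` dn p \<subseteq> ?F"
    proof
      fix z assume "z \<in> (\<lambda>u. kpair E M u (g u)) ` dn p"
      then obtain t where t: "t \<in> dn p" "z = kpair E M t (g t)" by blast
      have "t \<in> M" "g t \<in> M" using t(1) giso_mem[OF g t(1)] dn_M by blast+
      then have zM: "z \<in> M" using t(2) kpair_M by simp
      show "z \<in> ?F"
      proof (cases "t = p")
        case True
        then show ?thesis using t gp zM by simp
      next
        case False
        obtain y where y: "(y, p) \<in> S" "t \<in> dn y" using dn_decomp[OF t(1) False] by blast
        have yp: "y \<in> dn p" using dn_S[OF y(1) dn_self[OF 1(3)]] .
        have ynp: "y \<noteq> p"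
        proof
          assume "y = p"
          then have "(p, p) \<in> S\<^sup>+" using y(1) by (simp add: r_into_trancl')
          then show False using acyc by blast
        qed
        have w: "(g y, q) \<in> S" using giso_rel[OF g yp dn_self[OF 1(3)]] y(1) gp by simp
        have b: "(fp y, v) \<in> S\<^sup>+" "gi y (fp y)" using below_top[OF fp 1(3) 1(2) yp ynp] by blast+
        have gyy: "gi y (g y)" using giso_restr[OF g yp] unfolding gi_def by blast
        have M: "fp y \<in> M0" "y \<in> M0" "g y \<in> M0" using giso_mem[OF fp yp] giso_mem[OF g yp] dn_M0 yp
          by blast+
        have "iso_in E M C M0 R y (g y)"
          using IH[OF b(1) M(1) M(2) M(3) gi_sym[OF b(2)] gi_trans[OF gi_sym[OF b(2)] gyy]] .
        then obtain G where G: "G \<in> C" "isob G y (g y)" using iso_in_iff by blast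
        obtain h where h: "giso S h (dn y) (dn (g y))" "\<forall>u\<in>dn y. kpair E M u (h u) \<in> G"
          using H1[OF G(2)] by blast
        have NSy: "NS y" using NS_sub[OF NSp yp] .
        have "h t = g t" using rigid[OF M(2) M(3) NSy h(1) giso_restr[OF g yp] y(2)] .
        then have "z \<in> G" using bspec[OF h(2) y(2)] t(2) by simp
        then have "\<exists>G\<in>C. \<exists>y w. (y, p) \<in> S \<and> (w, q) \<in> S \<and> isob G y w \<and> z \<in> G"
          using G y(1) w by blast
        then show ?thesis using zM by simp
      qed
    qed
  qed
  have "isob ?F p q" using H2[OF g] Feq by simp
  then show "iso_in E M C M0 R p q" using FC iso_in_iff by blast
  qed
qed

lemma main: "v \<in> M0 \<Longrightarrow> p \<in> M0 \<Longrightarrow> q \<in> M0 \<Longrightarrow> gi v p \<Longrightarrow> gi v q \<Longrightarrow> iso_in E M C M0 R p q"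
  using main_aux by blast

end

context cp
begin

lemma cyc2: "(p, c) \<in> S\<^sup>* \<Longrightarrow> (c, p) \<in> S \<Longrightarrow> False"
proof -
  assume "(p, c) \<in> S\<^sup>*" "(c, p) \<in> S"
  then have "(p, p) \<in> S\<^sup>+" by (rule rtrancl_into_trancl1)
  then show False using acyc by blast
qed

lemma not_dn_child: "(c, p) \<in> S \<Longrightarrow> p \<notin> dn c"
  using cyc2 by (auto simp: dn_iff)

lemma L_par: assumes "(x, c) \<in> S\<^sup>*" "(c, p) \<in> S" "(x, p) \<in> S" shows "x = c"
  using assms(1)
proof (cases rule: converse_rtranclE)
  case base then show ?thesis by simp
next
  case (step x1)
  then have "x1 = p" using funS assms(3) by blast
  then show ?thesis using step(2) assms(2) cyc2 by blast
qed

lemma D2: assumes "(c, p) \<in> S" "(c', p) \<in> S" "t \<in> dn c" "t \<in> dn c'" shows "c = c'"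
proof (rule ccontr)
  assume ne: "c \<noteq> c'"
  have "(t, c) \<in> S\<^sup>*" "(t, c') \<in> S\<^sup>*" using assms(3,4) by (simp_all add: dn_iff)
  then have "(c, c') \<in> S\<^sup>* \<or> (c', c) \<in> S\<^sup>*" by (rule linS)
  then show False
  proof
    assume h: "(c, c') \<in> S\<^sup>*"
    then show False
    proof (cases rule: converse_rtranclE)
      case base then show ?thesis using ne by simp
    next
      case (step c1)
      then have "c1 = p" using funS assms(1) by blast
      then show ?thesis using step(2) assms(2) cyc2 by blast
    qed
  next
    assume h: "(c', c) \<in> S\<^sup>*"
    then show False
    proof (cases rule: converse_rtranclE)
      case base then show ?thesis using ne by simp
    next
      case (step c1)
      then have "c1 = p" using funS assms(2) by blast
      then show ?thesis using step(2) assms(1) cyc2 by blast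
    qed
  qed
qed

lemma F5: assumes pq: "p \<in> M0" "q \<in> M0"
  and fw: "\<And>c. (c, p) \<in> S \<Longrightarrow> \<exists>d. (d, q) \<in> S \<and> gi c d"
  and bw: "\<And>d. (d, q) \<in> S \<Longrightarrow> \<exists>c. (c, p) \<in> S \<and> gi c d"
  and SR: "\<And>t s s'. (s, t) \<in> S \<Longrightarrow> (s', t) \<in> S \<Longrightarrow> gi s s' \<Longrightarrow> s = s'"
  shows "gi p q"
proof -
  define \<sigma> where "\<sigma> c = (SOME d. (d, q) \<in> S \<and> gi c d)" for c
  have sig: "(\<sigma> c, q) \<in> S \<and> gi c (\<sigma> c)" if "(c, p) \<in> S" for c
    unfolding \<sigma>_def using fw[OF that] by (rule someI_ex)
  have sig_inj: "c = c'" if "(c, p) \<in> S" "(c', p) \<in> S" "\<sigma> c = \<sigma> c'" for c c'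
  proof -
    have "gi c (\<sigma> c)" "gi c' (\<sigma> c')" using sig that by blast+
    then have "gi c c'" using that(3) gi_sym gi_trans by metis
    then show ?thesis using SR that(1,2) by blast
  qed
  have sig_surj: "\<exists>c. (c, p) \<in> S \<and> \<sigma> c = d" if dq: "(d, q) \<in> S" for d
  proof -
    obtain c where c: "(c, p) \<in> S" "gi c d" using bw[OF dq] by blast
    have "gi c (\<sigma> c)" "(\<sigma> c, q) \<in> S" using sig[OF c(1)] by blast+
    then have "gi (\<sigma> c) d" using c(2) gi_sym gi_trans by metis
    then have "\<sigma> c = d" using SR \<open>(\<sigma> c, q) \<in> S\<close> dq by blast
    then show ?thesis using c(1) by blast
  qed
  define gc where "gc c = (SOME h. giso S h (dn c) (dn (\<sigma> c)))" for c
  have gc: "giso S (gc c) (dn c) (dn (\<sigma> c))" if "(c, p) \<in> S" for c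
  proof -
    have "gi c (\<sigma> c)" using sig[OF that] by blast
    then have "\<exists>h. giso S h (dn c) (dn (\<sigma> c))" unfolding gi_def .
    then show ?thesis unfolding gc_def by (rule someI_ex)
  qed
  define anc where "anc t = (THE c. (c, p) \<in> S \<and> t \<in> dn c)" for t
  have anc: "(anc t, p) \<in> S \<and> t \<in> dn (anc t)" if tt: "t \<in> dn p" "t \<noteq> p" for t
  proof -
    obtain c where c: "(c, p) \<in> S" "t \<in> dn c" using dn_decomp[OF tt] by blast
    have "\<exists>!c. (c, p) \<in> S \<and> t \<in> dn c"
      using c D2 by blast
    then show ?thesis unfolding anc_def by (rule theI')
  qed
  have anc_eq: "anc t = c" if "(c, p) \<in> S" "t \<in> dn c" for t c
  proof -
    have tp: "t \<in> dn p" using dn_sub[OF dn_S[OF that(1) dn_self[OF pq(1)]]] that(2) by blast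
    have "t \<noteq> p" using that not_dn_child by blast
    then show ?thesis using anc[OF tp] D2 that by blast
  qed
  define g where "g t = (if t = p then q else gc (anc t) t)" for t
  have cq: "\<sigma> c \<in> dn q" if "(c, p) \<in> S" for c
    using dn_S[OF conjunct1[OF sig[OF that]] dn_self[OF pq(2)]] .
  have gmem: "g t \<in> dn (\<sigma> (anc t))" if "t \<in> dn p" "t \<noteq> p" for t
    using giso_mem[OF gc[OF conjunct1[OF anc[OF that]]] conjunct2[OF anc[OF that]]] that(2)
    unfolding g_def by simp
  have gin: "g t \<in> dn q" if "t \<in> dn p" for t
  proof (cases "t = p")
    case True then show ?thesis unfolding g_def using dn_self[OF pq(2)] by simp
  next
    case False
    then show ?thesis using gmem[OF that False] dn_sub[OF cq[OF conjunct1[OF anc[OF that False]]]] by blast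
  qed
  have gnq: "g t \<noteq> q" if "t \<in> dn p" "t \<noteq> p" for t
  proof
    assume "g t = q"
    then have "q \<in> dn (\<sigma> (anc t))" using gmem[OF that] by simp
    moreover have "(\<sigma> (anc t), q) \<in> S" using sig[OF conjunct1[OF anc[OF that]]] by blast
    ultimately show False using not_dn_child by blast
  qed
  have inj: "inj_on g (dn p)"
  proof (rule inj_onI)
    fix x y assume x: "x \<in> dn p" and y: "y \<in> dn p" and e: "g x = g y"
    show "x = y"
    proof (cases "x = p")
      case True
      then have "g y = q" using e unfolding g_def by simp
      then show ?thesis using gnq[OF y] True by blast
    next
      case xp: False
      show ?thesis
      proof (cases "y = p")
        case True
        then have "g x = q" using e unfolding g_def by simp
        then show ?thesis using gnq[OF x] xp by blast
      next
        case yp: False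
        have ax: "(anc x, p) \<in> S" "x \<in> dn (anc x)" using anc[OF x xp] by blast+
        have ay: "(anc y, p) \<in> S" "y \<in> dn (anc y)" using anc[OF y yp] by blast+
        have "\<sigma> (anc x) = \<sigma> (anc y)"
          using D2[OF conjunct1[OF sig[OF ax(1)]] conjunct1[OF sig[OF ay(1)]] gmem[OF x xp]] gmem[OF y yp] e
          by simp
        then have same: "anc x = anc y" using sig_inj ax(1) ay(1) by blast
        have "gc (anc x) x = gc (anc x) y" using e same xp yp unfolding g_def by simp
        then show ?thesis using giso_inj[OF gc[OF ax(1)] ax(2)] ay(2) same by simp
      qed
    qed
  qed
  have surj: "g ` dn p = dn q"
  proof
    show "g ` dn p \<subseteq> dn q" using gin by blast
  next
    show "dn q \<subseteq> g ` dn p"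
    proof
      fix z assume z: "z \<in> dn q"
      show "z \<in> g ` dn p"
      proof (cases "z = q")
        case True
        then have "z = g p" unfolding g_def by simp
        then show ?thesis using dn_self[OF pq(1)] by blast
      next
        case False
        obtain d where d: "(d, q) \<in> S" "z \<in> dn d" using dn_decomp[OF z False] by blast
        obtain c where c: "(c, p) \<in> S" "\<sigma> c = d" using sig_surj[OF d(1)] by blast
        obtain x where x: "x \<in> dn c" "gc c x = z" using giso_surj[OF gc[OF c(1)]] d(2) c(2) by blast
        have xp: "x \<in> dn p" using dn_sub[OF dn_S[OF c(1) dn_self[OF pq(1)]]] x(1) by blast
        have xnp: "x \<noteq> p" using x(1) not_dn_child[OF c(1)] by blast
        have "anc x = c" using anc_eq[OF c(1) x(1)] .
        then have "g x = z" using x(2) xnp unfolding g_def by simp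
        then show ?thesis using xp by blast
      qed
    qed
  qed
  have rel: "(x, y) \<in> S \<longleftrightarrow> (g x, g y) \<in> S" if x: "x \<in> dn p" and y: "y \<in> dn p" for x y
  proof (cases "x = p")
    case True
    have "\<not> (\<exists>y\<in>dn p. (p, y) \<in> S)" using top_char[OF pq(1) dn_self[OF pq(1)]] by simp
    then have l: "(x, y) \<notin> S" using True y by blast
    have "\<not> (\<exists>y\<in>dn q. (q, y) \<in> S)" using top_char[OF pq(2) dn_self[OF pq(2)]] by simp
    moreover have "g x = q" using True unfolding g_def by simp
    ultimately have "(g x, g y) \<notin> S" using gin[OF y] by auto
    then show ?thesis using l by blast
  next
    case xp: False
    have ax: "(anc x, p) \<in> S" "x \<in> dn (anc x)" using anc[OF x xp] by blast+
    have sx: "(\<sigma> (anc x), q) \<in> S" using sig[OF ax(1)] by blast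
    have gx: "g x = gc (anc x) x" using xp unfolding g_def by simp
    have G: "giso S (gc (anc x)) (dn (anc x)) (dn (\<sigma> (anc x)))" using gc[OF ax(1)] .
    have am: "anc x \<in> M0" using S_M0[OF ax(1)] by blast
    show ?thesis
    proof (cases "y = p")
      case True
      have gy: "g y = q" using True unfolding g_def by simp
      have "(x, p) \<in> S \<longleftrightarrow> x = anc x"
        using L_par[of x "anc x" p] ax by (auto simp: dn_iff)
      also have "\<dots> \<longleftrightarrow> gc (anc x) x = gc (anc x) (anc x)"
      proof
        assume "x = anc x" then show "gc (anc x) x = gc (anc x) (anc x)" by simp
      next
        assume "gc (anc x) x = gc (anc x) (anc x)"
        then show "x = anc x" using giso_inj[OF G ax(2) dn_self[OF am]] by simp
      qed
      also have "gc (anc x) (anc x) = \<sigma> (anc x)"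
        using giso_top[OF G am] S_M0[OF sx] by blast
      also have "gc (anc x) x = \<sigma> (anc x) \<longleftrightarrow> (gc (anc x) x, q) \<in> S"
      proof
        assume "gc (anc x) x = \<sigma> (anc x)" then show "(gc (anc x) x, q) \<in> S" using sx by simp
      next
        assume h: "(gc (anc x) x, q) \<in> S"
        have "gc (anc x) x \<in> dn (\<sigma> (anc x))" using giso_mem[OF G ax(2)] .
        then have "(gc (anc x) x, \<sigma> (anc x)) \<in> S\<^sup>*" by (simp add: dn_iff)
        then show "gc (anc x) x = \<sigma> (anc x)" using L_par sx h by blast
      qed
      finally show ?thesis using True gx gy by simp
    next
      case yp: False
      have ay: "(anc y, p) \<in> S" "y \<in> dn (anc y)" using anc[OF y yp] by blast+
      have gy: "g y = gc (anc y) y" using yp unfolding g_def by simp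
      show ?thesis
      proof (cases "anc x = anc y")
        case True
        then show ?thesis using giso_rel[OF G ax(2)] ay(2) gx gy by simp
      next
        case False
        have l: "(x, y) \<notin> S"
        proof
          assume "(x, y) \<in> S"
          then have "x \<in> dn (anc y)" using dn_S ay(2) by blast
          then show False using D2[OF ax(1) ay(1) ax(2)] False by blast
        qed
        have sy: "(\<sigma> (anc y), q) \<in> S" using sig[OF ay(1)] by blast
        have ne: "\<sigma> (anc x) \<noteq> \<sigma> (anc y)" using sig_inj ax(1) ay(1) False by blast
        have r: "(g x, g y) \<notin> S"
        proof
          assume "(g x, g y) \<in> S"
          then have "g x \<in> dn (\<sigma> (anc y))" using dn_S gmem[OF y yp] by blast
          then show False using D2[OF sx sy gmem[OF x xp]] ne by blast
        qed
        show ?thesis using l r by blast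
      qed
    qed
  qed
  have "giso S g (dn p) (dn q)" unfolding giso_def bij_betw_def using inj surj rel by blast
  then show ?thesis unfolding gi_def by blast
qed

end

context cp
begin

lemma iso_gi: assumes "p \<in> M0" "q \<in> M0" shows "iso_in E M C M0 R p q \<longleftrightarrow> gi p q"
proof
  assume "iso_in E M C M0 R p q"
  then obtain G where "G \<in> C" "isob G p q" using iso_in_iff by blast
  then show "gi p q" using H1 unfolding gi_def by blast
next
  assume "gi p q"
  then show "iso_in E M C M0 R p q" using main[OF assms(1) assms(1) assms(2) gi_refl] by blast
qed

lemma iso_class_eq: "b \<in> M0 \<Longrightarrow> iso_class E M C M0 R b = {b'\<in>M0. gi b' b}"
  unfolding iso_class_def using iso_gi by blast

lemma sib: "(s, t) \<in> S \<Longrightarrow> (s', t) \<in> S \<Longrightarrow> gi s s' \<Longrightarrow> s = s'"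
proof (rule ccontr)
  assume h: "(s, t) \<in> S" "(s', t) \<in> S" "gi s s'" "s \<noteq> s'"
  have M: "s \<in> M0" "s' \<in> M0" "t \<in> M0" using h S_M0 by blast+
  have "iso_in E M C M0 R s s'" using iso_gi[OF M(1,2)] h(3) by blast
  then show False using cpb[OF M(3) M(1) M(2) h(4) h(1) h(2)] by blast
qed

abbreviation rp where "rp b \<equiv> rep E M C W M0 R b"

lemma rep_prop: assumes b: "b \<in> M0"
  shows "rp b \<in> iso_class E M C M0 R b \<and>
         (\<forall>d\<in>iso_class E M C M0 R b. d \<noteq> rp b \<longrightarrow> (rp b, d) \<in> crel E M W)"
proof -
  let ?K = "iso_class E M C M0 R b"
  have bK: "b \<in> ?K" using iso_class_eq[OF b] b gi_refl by simp
  have KM: "?K \<subseteq> M" using iso_class_eq[OF b] M0M by blast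
  obtain c where c: "c \<in> ?K" "\<And>y. (y, c) \<in> crel E M W \<Longrightarrow> y \<notin> ?K"
    using wfE_min[OF wfW bK] by blast
  have cmin: "\<forall>d\<in>?K. d \<noteq> c \<longrightarrow> (c, d) \<in> crel E M W"
  proof (intro ballI impI)
    fix d assume d: "d \<in> ?K" "d \<noteq> c"
    have "c \<in> M" "d \<in> M" using c(1) d(1) KM by blast+
    then have "(c, d) \<in> crel E M W \<or> (d, c) \<in> crel E M W" using Wtot d(2) by blast
    then show "(c, d) \<in> crel E M W" using c(2) d(1) by blast
  qed
  have uniq: "c' = c" if "c' \<in> ?K" "\<forall>d\<in>?K. d \<noteq> c' \<longrightarrow> (c', d) \<in> crel E M W" for c'
  proof (rule ccontr)
    assume ne: "c' \<noteq> c"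
    have "(c', c) \<in> crel E M W" using bspec[OF that(2) c(1)] ne by auto
    then show False using c(2) that(1) by blast
  qed
  have "\<exists>!c. c \<in> ?K \<and> (\<forall>d\<in>?K. d \<noteq> c \<longrightarrow> (c, d) \<in> crel E M W)"
    using c(1) cmin uniq by blast
  then show ?thesis unfolding rep_def by (rule theI')
qed

lemma rep_M0: "b \<in> M0 \<Longrightarrow> rp b \<in> M0"
  using rep_prop unfolding iso_class_def by blast

lemma rep_gi: "b \<in> M0 \<Longrightarrow> gi (rp b) b"
  using rep_prop iso_class_eq by blast

lemma rep_cong: assumes "b \<in> M0" "b' \<in> M0" "gi b b'" shows "rp b = rp b'"
proof -
  have "iso_class E M C M0 R b = iso_class E M C M0 R b'"
    using iso_class_eq assms gi_sym gi_trans by blast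
  then show ?thesis unfolding rep_def by simp
qed

lemma rep_idem: assumes "x \<in> qcarrier E M C W M0 R" shows "rp x = x" "x \<in> M0"
proof -
  obtain b where b: "b \<in> M0" "x = rp b" using assms unfolding qcarrier_def by blast
  show xM: "x \<in> M0" using rep_M0 b by simp
  have "gi x b" using rep_gi b by simp
  then show "rp x = x" using rep_cong[OF xM b(1)] b(2) by simp
qed

lemma qrel_sub: "qrel E M C W M0 R \<subseteq> {(x, y). x \<in> M0 \<and> y \<in> M0 \<and>
   (\<exists>b0 c0. b0 \<in> M0 \<and> c0 \<in> M0 \<and> gi b0 x \<and> gi c0 y \<and> (b0, c0) \<in> S)}"
proof
  fix z assume "z \<in> qrel E M C W M0 R"
  then obtain x y where z: "z = (x, y)" "x \<in> qcarrier E M C W M0 R" "y \<in> qcarrier E M C W M0 R"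
    "\<exists>b0\<in>iso_class E M C M0 R x. \<exists>c0\<in>iso_class E M C M0 R y. (b0, c0) \<in> S"
    unfolding qrel_def by blast
  have xy: "x \<in> M0" "y \<in> M0" using rep_idem z by blast+
  then show "z \<in> {(x, y). x \<in> M0 \<and> y \<in> M0 \<and>
   (\<exists>b0 c0. b0 \<in> M0 \<and> c0 \<in> M0 \<and> gi b0 x \<and> gi c0 y \<and> (b0, c0) \<in> S)}"
    using z(1,4) iso_class_eq[OF xy(1)] iso_class_eq[OF xy(2)] by auto
qed

lemma wf_T: "wf {(x, y). x \<in> M0 \<and> y \<in> M0 \<and>
   (\<exists>b0 c0. b0 \<in> M0 \<and> c0 \<in> M0 \<and> gi b0 x \<and> gi c0 y \<and> (b0, c0) \<in> S)}" (is "wf ?T")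
proof (rule wfUNIVI)
  fix P :: "'a \<Rightarrow> bool"
  assume ind: "\<forall>x. (\<forall>y. (y, x) \<in> ?T \<longrightarrow> P y) \<longrightarrow> P x"
  have Q: "\<forall>z. z \<in> M0 \<longrightarrow> gi z y \<longrightarrow> P z" if "y \<in> M0" for y
    using that
  proof (induction y rule: wf_induct[OF wfS])
    case (1 y)
    show ?case
    proof (intro allI impI)
      fix z assume z: "z \<in> M0" "gi z y"
      have "\<forall>x. (x, z) \<in> ?T \<longrightarrow> P x"
      proof (intro allI impI)
        fix x assume "(x, z) \<in> ?T"
        then obtain b0 c0 where h: "x \<in> M0" "b0 \<in> M0" "c0 \<in> M0" "gi b0 x" "gi c0 z" "(b0, c0) \<in> S"
          by blast
        have "gi c0 y" using gi_trans[OF h(5) z(2)] .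
        then obtain f where f: "giso S f (dn c0) (dn y)" unfolding gi_def by blast
        have b0c: "b0 \<in> dn c0" using dn_child[OF h(6)] .
        have fc: "f c0 = y" using giso_top[OF f h(3) 1(2)] .
        have fb: "(f b0, y) \<in> S" using giso_rel[OF f b0c dn_self[OF h(3)]] h(6) fc by simp
        have "gi b0 (f b0)" using giso_restr[OF f b0c] unfolding gi_def by blast
        then have gx: "gi x (f b0)" using gi_trans[OF gi_sym[OF h(4)]] by blast
        have fbM: "f b0 \<in> M0" using S_M0[OF fb] by blast
        have "\<forall>z. z \<in> M0 \<longrightarrow> gi z (f b0) \<longrightarrow> P z" using 1(1) fb fbM by blast
        then show "P x" using h(1) gx by blast
      qed
      then show "P z" using ind by blast
    qed
  qed
  show "P x" for x
  proof (cases "x \<in> M0")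
    case True then show ?thesis using Q[OF True] gi_refl by blast
  next
    case False
    then have "\<forall>y. (y, x) \<in> ?T \<longrightarrow> P y" by blast
    then show ?thesis using ind by blast
  qed
qed

lemma wf_qrel: "wf (qrel E M C W M0 R)"
  using wf_subset[OF wf_T qrel_sub] .

lemma ext_qrel: "extensional_rel (qcarrier E M C W M0 R) (qrel E M C W M0 R)"
  unfolding extensional_rel_def
proof (intro ballI impI)
  let ?Q = "qcarrier E M C W M0 R"
  let ?qr = "qrel E M C W M0 R"
  fix x y assume x: "x \<in> ?Q" and y: "y \<in> ?Q" and e: "\<forall>v\<in>?Q. (v, x) \<in> ?qr \<longleftrightarrow> (v, y) \<in> ?qr"
  have xM: "x \<in> M0" "rp x = x" using rep_idem[OF x] by auto
  have yM: "y \<in> M0" "rp y = y" using rep_idem[OF y] by auto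
  have trans_child: "\<exists>d. (d, y') \<in> S \<and> gi u d"
    if x': "x' \<in> ?Q" "y' \<in> ?Q" "\<forall>v\<in>?Q. (v, x') \<in> ?qr \<longrightarrow> (v, y') \<in> ?qr" "(u, x') \<in> S" for x' y' u
  proof -
    have x'M: "x' \<in> M0" using rep_idem[OF x'(1)] by blast
    have y'M: "y' \<in> M0" using rep_idem[OF x'(2)] by blast
    have uM: "u \<in> M0" using S_M0[OF x'(4)] by blast
    have zQ: "rp u \<in> ?Q" unfolding qcarrier_def using uM by blast
    have zM: "rp u \<in> M0" using rep_M0[OF uM] .
    have "u \<in> iso_class E M C M0 R (rp u)" using iso_class_eq[OF zM] uM gi_sym[OF rep_gi[OF uM]] by blast
    moreover have "x' \<in> iso_class E M C M0 R x'" using iso_class_eq[OF x'M] x'M gi_refl by blast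
    ultimately have "(rp u, x') \<in> ?qr" unfolding qrel_def using zQ x'(1) x'(4) by blast
    then have "(rp u, y') \<in> ?qr" using x'(3) zQ by blast
    then obtain b0 c0 where h: "b0 \<in> M0" "c0 \<in> M0" "gi b0 (rp u)" "gi c0 y'" "(b0, c0) \<in> S"
      using qrel_sub by blast
    obtain f where f: "giso S f (dn c0) (dn y')" using h(4) unfolding gi_def by blast
    have b0c: "b0 \<in> dn c0" using dn_child[OF h(5)] .
    have fc: "f c0 = y'" using giso_top[OF f h(2) y'M] .
    have fb: "(f b0, y') \<in> S" using giso_rel[OF f b0c dn_self[OF h(2)]] h(5) fc by simp
    have "gi b0 (f b0)" using giso_restr[OF f b0c] unfolding gi_def by blast
    moreover have "gi u b0" using gi_trans[OF gi_sym[OF rep_gi[OF uM]] gi_sym[OF h(3)]] .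
    ultimately have "gi u (f b0)" using gi_trans by blast
    then show ?thesis using fb by blast
  qed
  have "gi x y"
  proof (rule F5[OF xM(1) yM(1)])
    fix c assume "(c, x) \<in> S"
    then show "\<exists>d. (d, y) \<in> S \<and> gi c d" using trans_child[OF x y] e by blast
  next
    fix d assume d: "(d, y) \<in> S"
    obtain c where "(c, x) \<in> S" "gi d c" using trans_child[OF y x _ d] e by blast
    then show "\<exists>c. (c, x) \<in> S \<and> gi c d" using gi_sym by blast
  next
    fix t s s' assume "(s, t) \<in> S" "(s', t) \<in> S" "gi s s'"
    then show "s = s'" by (rule sib)
  qed
  then have "rp x = rp y" using rep_cong[OF xM(1) yM(1)] by blast
  then show "x = y" using xM yM by simp
qed

end

theorem lemma6:
  fixes E :: "'a \<Rightarrow> 'a \<Rightarrow> bool" and M :: "'a set" and C :: "'a set set"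
    and M0 R W :: "'a set" and a :: 'a
  assumes "wfP E"
    and "transitive_in E M"
    and "MK_star E M C"
    and "beta_model E M C"
    and "coding_pair E M C M0 R a"
    and "global_wo E M C W"
  shows "extensional_rel (qcarrier E M C W M0 R) (qrel E M C W M0 R)
         \<and> wf (qrel E M C W M0 R)"
proof -
  interpret cp E M C M0 R W a using assms by unfold_locales
  show ?thesis using ext_qrel wf_qrel by blast
qed

end
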